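(* Assume $\xi\neq0$. Then the fixed locus $\mathcal M^{N,K}(M_1,M_2)^{\mathbf T_{\mathrm{edge}}}$ is proper (compact).
   Context: Fix integers $N,K,M_1,M_2\ge0$ and $\xi\neq 0$. $\mathcal M^{N,K}(M_1,M_2)$ is the quotient by $U(M_1)\times U(M_2)$ of the space of tuples $(X,Y,I,J,\tilde X,\tilde Y,\tilde I,\tilde J,S)$ with $X,Y\in\mathrm{End}(\mathbb C^{M_1})$, $I\in\mathrm{Hom}(\mathbb C^N,\mathbb C^{M_1})$, $J\in\mathrm{Hom}(\mathbb C^{M_1},\mathbb C^N)$, $\tilde X,\tilde Y\in\mathrm{End}(\mathbb C^{M_2})$, $\tilde I\in\mathrm{Hom}(\mathbb C^K,\mathbb C^{M_2})$, $\tilde J\in\mathrm{Hom}(\mathbb C^{M_2},\mathbb C^K)$, $S\in\mathrm{Hom}(\mathbb C^{M_1},\mathbb C^{M_2})$ satisfying $[X,Y]+IJ=0$, $[\tilde X,\tilde Y]+\tilde I\tilde J=0$, $[X,X^\dagger]+[Y,Y^\dagger]+II^\dagger-J^\dagger J-S^\dagger S=\xi1_{M_1}$, $[\tilde X,\tilde X^\dagger]+[\tilde Y,\tilde Y^\dagger]+\tilde I\tilde I^\dagger-\tilde J^\dagger\tilde J+SS^\dagger=\xi1_{M_2}$, where $(g,h)$ acts by $X\mapsto gXg^{-1}$, $Y\mapsto gYg^{-1}$, $I\mapsto gI$, $J\mapsto Jg^{-1}$, similarly for tilded maps with $h$, $S\mapsto hSg^{-1}$. The torus $\mathbf T_{\mathrm{edge}}=(\mathbb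 C^\times)^5\ni(r_1,r_2,s_1,s_2,t)$ acts by $(X,Y,I,J)\mapsto(r_1X,r_2Y,I,r_1r_2J)$, $(\tilde X,\tilde Y,\tilde I,\tilde J)\mapsto(s_1\tilde X,s_2\tilde Y,\tilde I,s_1s_2\tilde J)$, $S\mapsto tS$. *)

theory Defs
  imports "HOL-Analysis.Analysis"
begin

text \<open>Complex matrices are represented as functions nat => nat => complex;
  an m x n matrix is one vanishing outside rows < m and columns < n.\<close>

type_synonym cmat = "nat \<Rightarrow> nat \<Rightarrow> complex"

definition mat_in :: "nat \<Rightarrow> nat \<Rightarrow> cmat \<Rightarrow> bool" where
  "mat_in m n A \<longleftrightarrow> (\<forall>i j. (m \<le> i \<or> n \<le> j) \<longrightarrow> A i j = 0)"

definition mmul :: "nat \<Rightarrow> cmat \<Rightarrow> cmat \<Rightarrow> cmat" where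
  "mmul p A B = (\<lambda>i j. \<Sum>k<p. A i k * B k j)"

definition madj :: "cmat \<Rightarrow> cmat" where
  "madj A = (\<lambda>i j. cnj (A j i))"

definition mid :: "nat \<Rightarrow> cmat" where
  "mid m = (\<lambda>i j. if i = j \<and> i < m then 1 else 0)"

definition unitary :: "nat \<Rightarrow> cmat \<Rightarrow> bool" where
  "unitary m g \<longleftrightarrow> mat_in m m g \<and> mmul m g (madj g) = mid m \<and> mmul m (madj g) g = mid m"

text \<open>Tuples (X, Y, I, J, X~, Y~, I~, J~, S).\<close>
type_synonym qdata = "cmat \<times> cmat \<times> cmat \<times> cmat \<times> cmat \<times> cmat \<times> cmat \<times> cmat \<times> cmat"

definition level_set :: "nat \<Rightarrow> nat \<Rightarrow> nat \<Rightarrow> nat \<Rightarrow> real \<Rightarrow> qdata set" where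
  "level_set N K M1 M2 \<xi> = {(X, Y, I, J, X', Y', I', J', S).
     mat_in M1 M1 X \<and> mat_in M1 M1 Y \<and> mat_in M1 N I \<and> mat_in N M1 J \<and>
     mat_in M2 M2 X' \<and> mat_in M2 M2 Y' \<and> mat_in M2 K I' \<and> mat_in K M2 J' \<and>
     mat_in M2 M1 S \<and>
     (\<forall>i j. mmul M1 X Y i j - mmul M1 Y X i j + mmul N I J i j = 0) \<and>
     (\<forall>i j. mmul M2 X' Y' i j - mmul M2 Y' X' i j + mmul K I' J' i j = 0) \<and>
     (\<forall>i j. (mmul M1 X (madj X) i j - mmul M1 (madj X) X i j)
       + (mmul M1 Y (madj Y) i j - mmul M1 (madj Y) Y i j)
       + mmul N I (madj I) i j - mmul N (madj J) J i j - mmul M2 (madj S) S i j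
       = complex_of_real \<xi> * mid M1 i j) \<and>
     (\<forall>i j. (mmul M2 X' (madj X') i j - mmul M2 (madj X') X' i j)
       + (mmul M2 Y' (madj Y') i j - mmul M2 (madj Y') Y' i j)
       + mmul K I' (madj I') i j - mmul K (madj J') J' i j + mmul M1 S (madj S) i j
       = complex_of_real \<xi> * mid M2 i j)}"

text \<open>Action of (g,h) in U(M1) x U(M2); g^{-1} = g^dagger.\<close>
definition gauge_act :: "nat \<Rightarrow> nat \<Rightarrow> nat \<Rightarrow> nat \<Rightarrow> cmat \<Rightarrow> cmat \<Rightarrow> qdata \<Rightarrow> qdata" where
  "gauge_act N K M1 M2 g h = (\<lambda>(X, Y, I, J, X', Y', I', J', S).
     (mmul M1 (mmul M1 g X) (madj g), mmul M1 (mmul M1 g Y) (madj g),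
      mmul M1 g I, mmul M1 J (madj g),
      mmul M2 (mmul M2 h X') (madj h), mmul M2 (mmul M2 h Y') (madj h),
      mmul M2 h I', mmul M2 J' (madj h),
      mmul M1 (mmul M2 h S) (madj g)))"

definition gauge_orbit :: "nat \<Rightarrow> nat \<Rightarrow> nat \<Rightarrow> nat \<Rightarrow> qdata \<Rightarrow> qdata set" where
  "gauge_orbit N K M1 M2 x = {gauge_act N K M1 M2 g h x | g h. unitary M1 g \<and> unitary M2 h}"

text \<open>The moduli space M^{N,K}(M1,M2) as the set of orbits, with the quotient topology.\<close>
definition moduli :: "nat \<Rightarrow> nat \<Rightarrow> nat \<Rightarrow> nat \<Rightarrow> real \<Rightarrow> qdata set set" where
  "moduli N K M1 M2 \<xi> = gauge_orbit N K M1 M2 ` level_set N K M1 M2 \<xi>"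

definition moduli_top :: "nat \<Rightarrow> nat \<Rightarrow> nat \<Rightarrow> nat \<Rightarrow> real \<Rightarrow> qdata set topology" where
  "moduli_top N K M1 M2 \<xi> = topology (\<lambda>U. U \<subseteq> moduli N K M1 M2 \<xi> \<and>
      openin (top_of_set (level_set N K M1 M2 \<xi>)) (\<Union>U))"

definition msc :: "complex \<Rightarrow> cmat \<Rightarrow> cmat" where
  "msc c A = (\<lambda>i j. c * A i j)"

definition torus_act :: "complex \<Rightarrow> complex \<Rightarrow> complex \<Rightarrow> complex \<Rightarrow> complex \<Rightarrow> qdata \<Rightarrow> qdata" where
  "torus_act r1 r2 s1 s2 t = (\<lambda>(X, Y, I, J, X', Y', I', J', S).
     (msc r1 X, msc r2 Y, I, msc (r1 * r2) J, msc s1 X', msc s2 Y', I', msc (s1 * s2) J', msc t S))"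

end

theory Submission
  imports Defs "Jordan_Normal_Form.Char_Poly" "HOL-Computational_Algebra.Fundamental_Theorem_Algebra"
begin

lemma mat_inD: "mat_in m n A \<Longrightarrow> m \<le> i \<or> n \<le> j \<Longrightarrow> A i j = 0"
  by (auto simp: mat_in_def)

lemma mat_in_mmul: "mat_in m p A \<Longrightarrow> mat_in q n B \<Longrightarrow> mat_in m n (mmul k A B)"
  by (auto simp: mat_in_def mmul_def)

lemma mmul_assoc: "mmul p (mmul q A B) C = mmul q A (mmul p B C)"
  unfolding mmul_def
  by (auto simp: sum_distrib_left sum_distrib_right mult.assoc intro!: ext sum.swap[THEN trans])

lemma madj_mmul: "madj (mmul p A B) = mmul p (madj B) (madj A)"
  by (auto simp: madj_def mmul_def mult.commute intro!: ext)

lemma madj_madj[simp]: "madj (madj A) = A"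
  by (simp add: madj_def)

lemma mat_in_madj: "mat_in m n A \<Longrightarrow> mat_in n m (madj A)"
  by (auto simp: mat_in_def madj_def)

lemma mat_in_mid: "mat_in m m (mid m)"
  by (auto simp: mat_in_def mid_def)

lemma madj_mid[simp]: "madj (mid m) = mid m"
  by (auto simp: madj_def mid_def intro!: ext)

lemma mmul_mid_left: "mat_in m n A \<Longrightarrow> mmul m (mid m) A = A"
proof (rule ext, rule ext)
  fix i j assume A: "mat_in m n A"
  have "mmul m (mid m) A i j = (\<Sum>k<m. if k = i then A i j else 0)"
    unfolding mmul_def mid_def by (rule sum.cong) auto
  also have "\<dots> = A i j" using A by (auto simp: mat_in_def)
  finally show "mmul m (mid m) A i j = A i j" .
qed

lemma mmul_mid_right: "mat_in m n A \<Longrightarrow> mmul n A (mid n) = A"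
proof (rule ext, rule ext)
  fix i j assume A: "mat_in m n A"
  have "mmul n A (mid n) i j = (\<Sum>k<n. if k = j then A i j else 0)"
    unfolding mmul_def mid_def by (rule sum.cong) auto
  also have "\<dots> = A i j" using A by (auto simp: mat_in_def)
  finally show "mmul n A (mid n) i j = A i j" .
qed

lemma unitary_mid: "unitary m (mid m)"
  unfolding unitary_def using mmul_mid_left[OF mat_in_mid] by (simp add: mat_in_mid)

lemma unitary_madj: "unitary m g \<Longrightarrow> unitary m (madj g)"
  unfolding unitary_def by (auto simp: mat_in_madj)

lemma unitary_mmul:
  assumes "unitary m g" "unitary m h" shows "unitary m (mmul m g h)"
proof -
  have g: "mat_in m m g" "mmul m g (madj g) = mid m" "mmul m (madj g) g = mid m"
    and h: "mat_in m m h" "mmul m h (madj h) = mid m" "mmul m (madj h) h = mid m"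
    using assms unfolding unitary_def by auto
  have "mmul m (mmul m g h) (madj (mmul m g h)) = mmul m g (mmul m (mmul m h (madj h)) (madj g))"
    by (simp add: madj_mmul mmul_assoc)
  also have "\<dots> = mid m" using h(2) g(2) mmul_mid_left[OF mat_in_madj[OF g(1)]] by simp
  finally have 1: "mmul m (mmul m g h) (madj (mmul m g h)) = mid m" .
  have "mmul m (madj (mmul m g h)) (mmul m g h) = mmul m (madj h) (mmul m (mmul m (madj g) g) h)"
    by (simp add: madj_mmul mmul_assoc)
  also have "\<dots> = mid m" using h(3) g(3) mmul_mid_left[OF h(1)] by simp
  finally show ?thesis using 1 mat_in_mmul[OF g(1) h(1)] unfolding unitary_def by simp
qed

lemma mmul_add_left: "mmul p (\<lambda>i j. A i j + B i j) C = (\<lambda>i j. mmul p A C i j + mmul p B C i j)"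
  by (auto simp: mmul_def distrib_right sum.distrib intro!: ext)
lemma mmul_diff_left: "mmul p (\<lambda>i j. A i j - B i j) C = (\<lambda>i j. mmul p A C i j - mmul p B C i j)"
  by (auto simp: mmul_def left_diff_distrib sum_subtractf intro!: ext)
lemma mmul_scale_left: "mmul p (\<lambda>i j. c * A i j) C = (\<lambda>i j. c * mmul p A C i j)"
  by (auto simp: mmul_def sum_distrib_left mult.assoc intro!: ext)
lemma mmul_add_right: "mmul p C (\<lambda>i j. A i j + B i j) = (\<lambda>i j. mmul p C A i j + mmul p C B i j)"
  by (auto simp: mmul_def distrib_left sum.distrib intro!: ext)
lemma mmul_diff_right: "mmul p C (\<lambda>i j. A i j - B i j) = (\<lambda>i j. mmul p C A i j - mmul p C B i j)"
  by (auto simp: mmul_def right_diff_distrib sum_subtractf intro!: ext)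
lemma mmul_scale_right: "mmul p C (\<lambda>i j. c * A i j) = (\<lambda>i j. c * mmul p C A i j)"
  by (auto simp: mmul_def sum_distrib_left mult.left_commute intro!: ext)
lemma mmul_zero_left: "mmul p (\<lambda>i j. 0) C = (\<lambda>i j. 0)"
  by (auto simp: mmul_def intro!: ext)
lemma mmul_zero_right: "mmul p C (\<lambda>i j. 0) = (\<lambda>i j. 0)"
  by (auto simp: mmul_def intro!: ext)

definition diagm :: "nat \<Rightarrow> (nat \<Rightarrow> complex) \<Rightarrow> cmat" where
  "diagm m d = (\<lambda>i j. if i = j \<and> i < m then d i else 0)"

lemma mmul_diagm_left: "mmul m (diagm m d) A = (\<lambda>i j. if i < m then d i * A i j else 0)"
proof (rule ext, rule ext)
  fix i j
  have "mmul m (diagm m d) A i j = (\<Sum>k<m. if k = i then d i * A i j else 0)"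
    unfolding mmul_def diagm_def by (rule sum.cong) auto
  also have "\<dots> = (if i < m then d i * A i j else 0)" by auto
  finally show "mmul m (diagm m d) A i j = (if i < m then d i * A i j else 0)" .
qed

lemma mmul_diagm_right: "mmul m A (madj (diagm m d)) = (\<lambda>i j. if j < m then A i j * cnj (d j) else 0)"
proof (rule ext, rule ext)
  fix i j
  have "mmul m A (madj (diagm m d)) i j = (\<Sum>k<m. if k = j then A i j * cnj (d j) else 0)"
    unfolding mmul_def diagm_def madj_def by (rule sum.cong) auto
  also have "\<dots> = (if j < m then A i j * cnj (d j) else 0)" by auto
  finally show "mmul m A (madj (diagm m d)) i j = (if j < m then A i j * cnj (d j) else 0)" .
qed

definition cj :: "nat \<Rightarrow> cmat \<Rightarrow> cmat \<Rightarrow> cmat" where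
  "cj m g A = mmul m (mmul m g A) (madj g)"

lemma cj_add: "cj m g (\<lambda>i j. A i j + B i j) = (\<lambda>i j. cj m g A i j + cj m g B i j)"
  by (simp add: cj_def mmul_add_left mmul_add_right)
lemma cj_diff: "cj m g (\<lambda>i j. A i j - B i j) = (\<lambda>i j. cj m g A i j - cj m g B i j)"
  by (simp add: cj_def mmul_diff_left mmul_diff_right)
lemma cj_scale: "cj m g (\<lambda>i j. c * A i j) = (\<lambda>i j. c * cj m g A i j)"
  by (simp add: cj_def mmul_scale_left mmul_scale_right)
lemma cj_zero: "cj m g (\<lambda>i j. 0) = (\<lambda>i j. 0)"
  by (simp add: cj_def mmul_zero_left mmul_zero_right)
lemma cj_mid: "unitary m g \<Longrightarrow> cj m g (mid m) = mid m"
  unfolding cj_def unitary_def using mmul_mid_right by metis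

lemma madj_cj: "madj (cj m g A) = cj m g (madj A)"
  by (simp add: cj_def madj_mmul mmul_assoc)

lemma cj_mmul: assumes "unitary m g" "mat_in m m B"
  shows "mmul m (cj m g A) (cj m g B) = cj m g (mmul m A B)"
proof -
  have gg: "mmul m (madj g) g = mid m" and g: "mat_in m m g" using assms(1) unfolding unitary_def by auto
  have "mmul m (cj m g A) (cj m g B) = mmul m g (mmul m A (mmul m (mmul m (madj g) g) (mmul m B (madj g))))"
    by (simp add: cj_def mmul_assoc)
  also have "\<dots> = mmul m g (mmul m A (mmul m B (madj g)))"
    using gg mmul_mid_left[OF mat_in_mmul[OF assms(2) mat_in_madj[OF g]]] by simp
  also have "\<dots> = cj m g (mmul m A B)" by (simp add: cj_def mmul_assoc)
  finally show ?thesis .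
qed

lemma gauge_act_comp:
  "gauge_act N K M1 M2 g h (gauge_act N K M1 M2 g' h' x) =
   gauge_act N K M1 M2 (mmul M1 g g') (mmul M2 h h') x"
proof -
  obtain X Y I J X' Y' I' J' S where xe: "x = (X, Y, I, J, X', Y', I', J', S)"
    by (cases x) auto
  show ?thesis by (simp add: xe gauge_act_def mmul_assoc madj_mmul)
qed

lemma level_setD:
  assumes "(X, Y, I, J, X', Y', I', J', S) \<in> level_set N K M1 M2 \<xi>"
  shows "mat_in M1 M1 X" "mat_in M1 M1 Y" "mat_in M1 N I" "mat_in N M1 J"
     "mat_in M2 M2 X'" "mat_in M2 M2 Y'" "mat_in M2 K I'" "mat_in K M2 J'"
     "mat_in M2 M1 S"
     "(\<lambda>i j. mmul M1 X Y i j - mmul M1 Y X i j + mmul N I J i j) = (\<lambda>i j. 0)"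
     "(\<lambda>i j. mmul M2 X' Y' i j - mmul M2 Y' X' i j + mmul K I' J' i j) = (\<lambda>i j. 0)"
     "(\<lambda>i j. (mmul M1 X (madj X) i j - mmul M1 (madj X) X i j)
       + (mmul M1 Y (madj Y) i j - mmul M1 (madj Y) Y i j)
       + mmul N I (madj I) i j - mmul N (madj J) J i j - mmul M2 (madj S) S i j)
       = (\<lambda>i j. complex_of_real \<xi> * mid M1 i j)"
     "(\<lambda>i j. (mmul M2 X' (madj X') i j - mmul M2 (madj X') X' i j)
       + (mmul M2 Y' (madj Y') i j - mmul M2 (madj Y') Y' i j)
       + mmul K I' (madj I') i j - mmul K (madj J') J' i j + mmul M1 S (madj S) i j)
       = (\<lambda>i j. complex_of_real \<xi> * mid M2 i j)"
  using assms unfolding level_set_def by (auto intro!: ext)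

lemma level_setI:
  assumes "mat_in M1 M1 X" "mat_in M1 M1 Y" "mat_in M1 N I" "mat_in N M1 J"
     "mat_in M2 M2 X'" "mat_in M2 M2 Y'" "mat_in M2 K I'" "mat_in K M2 J'"
     "mat_in M2 M1 S"
     "(\<lambda>i j. mmul M1 X Y i j - mmul M1 Y X i j + mmul N I J i j) = (\<lambda>i j. 0)"
     "(\<lambda>i j. mmul M2 X' Y' i j - mmul M2 Y' X' i j + mmul K I' J' i j) = (\<lambda>i j. 0)"
     "(\<lambda>i j. (mmul M1 X (madj X) i j - mmul M1 (madj X) X i j)
       + (mmul M1 Y (madj Y) i j - mmul M1 (madj Y) Y i j)
       + mmul N I (madj I) i j - mmul N (madj J) J i j - mmul M2 (madj S) S i j)
       = (\<lambda>i j. complex_of_real \<xi> * mid M1 i j)"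
     "(\<lambda>i j. (mmul M2 X' (madj X') i j - mmul M2 (madj X') X' i j)
       + (mmul M2 Y' (madj Y') i j - mmul M2 (madj Y') Y' i j)
       + mmul K I' (madj I') i j - mmul K (madj J') J' i j + mmul M1 S (madj S) i j)
       = (\<lambda>i j. complex_of_real \<xi> * mid M2 i j)"
  shows "(X, Y, I, J, X', Y', I', J', S) \<in> level_set N K M1 M2 \<xi>"
  using assms unfolding level_set_def fun_eq_iff by auto

lemma level_gauge:
  assumes x: "x \<in> level_set N K M1 M2 \<xi>" and g: "unitary M1 g" and h: "unitary M2 h"
  shows "gauge_act N K M1 M2 g h x \<in> level_set N K M1 M2 \<xi>"
proof -
  obtain X Y I J X' Y' I' J' S where xe: "x = (X, Y, I, J, X', Y', I', J', S)"
    by (cases x) auto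
  note L = level_setD[OF x[unfolded xe]]
  have gm: "mat_in M1 M1 g" "mmul M1 g (madj g) = mid M1" "mmul M1 (madj g) g = mid M1"
    using g unfolding unitary_def by auto
  have hm: "mat_in M2 M2 h" "mmul M2 h (madj h) = mid M2" "mmul M2 (madj h) h = mid M2"
    using h unfolding unitary_def by auto
  define S1 where "S1 = mmul M1 (mmul M2 h S) (madj g)"
  have ge: "gauge_act N K M1 M2 g h x = (cj M1 g X, cj M1 g Y, mmul M1 g I, mmul M1 J (madj g),
     cj M2 h X', cj M2 h Y', mmul M2 h I', mmul M2 J' (madj h), S1)"
    by (simp add: xe gauge_act_def cj_def S1_def)
  have a1: "mmul N (mmul M1 g I) (mmul M1 J (madj g)) = cj M1 g (mmul N I J)"
    by (simp add: cj_def mmul_assoc)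
  have a2: "mmul K (mmul M2 h I') (mmul M2 J' (madj h)) = cj M2 h (mmul K I' J')"
    by (simp add: cj_def mmul_assoc)
  have a3: "mmul N (mmul M1 g I) (madj (mmul M1 g I)) = cj M1 g (mmul N I (madj I))"
    by (simp add: cj_def mmul_assoc madj_mmul)
  have a4: "mmul K (mmul M2 h I') (madj (mmul M2 h I')) = cj M2 h (mmul K I' (madj I'))"
    by (simp add: cj_def mmul_assoc madj_mmul)
  have a5: "mmul N (madj (mmul M1 J (madj g))) (mmul M1 J (madj g)) = cj M1 g (mmul N (madj J) J)"
    by (simp add: cj_def mmul_assoc madj_mmul)
  have a6: "mmul K (madj (mmul M2 J' (madj h))) (mmul M2 J' (madj h)) = cj M2 h (mmul K (madj J') J')"
    by (simp add: cj_def mmul_assoc madj_mmul)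
  have "mmul M2 (madj S1) S1 = mmul M1 g (mmul M2 (madj S) (mmul M2 (mmul M2 (madj h) h) (mmul M1 S (madj g))))"
    by (simp add: S1_def mmul_assoc madj_mmul)
  also have "\<dots> = cj M1 g (mmul M2 (madj S) S)"
    using hm(3) mmul_mid_left[OF mat_in_mmul[OF L(9) mat_in_madj[OF gm(1)]]]
    by (simp add: cj_def mmul_assoc)
  finally have a7: "mmul M2 (madj S1) S1 = cj M1 g (mmul M2 (madj S) S)" .
  have "mmul M1 S1 (madj S1) = mmul M2 h (mmul M1 S (mmul M1 (mmul M1 (madj g) g) (mmul M2 (madj S) (madj h))))"
    by (simp add: S1_def mmul_assoc madj_mmul)
  also have "\<dots> = cj M2 h (mmul M1 S (madj S))"
    using gm(3) mmul_mid_left[OF mat_in_mmul[OF mat_in_madj[OF L(9)] mat_in_madj[OF hm(1)]]]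
    by (simp add: cj_def mmul_assoc)
  finally have a8: "mmul M1 S1 (madj S1) = cj M2 h (mmul M1 S (madj S))" .
  have b1: "mmul M1 (cj M1 g X) (cj M1 g Y) = cj M1 g (mmul M1 X Y)"
       "mmul M1 (cj M1 g Y) (cj M1 g X) = cj M1 g (mmul M1 Y X)"
       "mmul M1 (cj M1 g X) (madj (cj M1 g X)) = cj M1 g (mmul M1 X (madj X))"
       "mmul M1 (madj (cj M1 g X)) (cj M1 g X) = cj M1 g (mmul M1 (madj X) X)"
       "mmul M1 (cj M1 g Y) (madj (cj M1 g Y)) = cj M1 g (mmul M1 Y (madj Y))"
       "mmul M1 (madj (cj M1 g Y)) (cj M1 g Y) = cj M1 g (mmul M1 (madj Y) Y)"
    using cj_mmul[OF g] L(1,2) mat_in_madj[OF L(1)] mat_in_madj[OF L(2)] by (auto simp: madj_cj)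
  have b2: "mmul M2 (cj M2 h X') (cj M2 h Y') = cj M2 h (mmul M2 X' Y')"
       "mmul M2 (cj M2 h Y') (cj M2 h X') = cj M2 h (mmul M2 Y' X')"
       "mmul M2 (cj M2 h X') (madj (cj M2 h X')) = cj M2 h (mmul M2 X' (madj X'))"
       "mmul M2 (madj (cj M2 h X')) (cj M2 h X') = cj M2 h (mmul M2 (madj X') X')"
       "mmul M2 (cj M2 h Y') (madj (cj M2 h Y')) = cj M2 h (mmul M2 Y' (madj Y'))"
       "mmul M2 (madj (cj M2 h Y')) (cj M2 h Y') = cj M2 h (mmul M2 (madj Y') Y')"
    using cj_mmul[OF h] L(5,6) mat_in_madj[OF L(5)] mat_in_madj[OF L(6)] by (auto simp: madj_cj)
  have m1: "mat_in M1 M1 (cj M1 g X)" "mat_in M1 M1 (cj M1 g Y)" "mat_in M1 N (mmul M1 g I)"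
    "mat_in N M1 (mmul M1 J (madj g))" "mat_in M2 M2 (cj M2 h X')" "mat_in M2 M2 (cj M2 h Y')"
    "mat_in M2 K (mmul M2 h I')" "mat_in K M2 (mmul M2 J' (madj h))" "mat_in M2 M1 S1"
    unfolding cj_def S1_def
    by (auto intro!: mat_in_mmul intro: mat_in_madj gm(1) hm(1) L)
  have e1: "(\<lambda>i j. mmul M1 (cj M1 g X) (cj M1 g Y) i j - mmul M1 (cj M1 g Y) (cj M1 g X) i j
      + mmul N (mmul M1 g I) (mmul M1 J (madj g)) i j) = (\<lambda>i j. 0)"
  proof -
    have "cj M1 g (\<lambda>i j. mmul M1 X Y i j - mmul M1 Y X i j + mmul N I J i j) = cj M1 g (\<lambda>i j. 0)"
      using L(10) by simp
    thus ?thesis by (simp add: cj_add cj_diff b1 a1 cj_zero)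
  qed
  have e2: "(\<lambda>i j. mmul M2 (cj M2 h X') (cj M2 h Y') i j - mmul M2 (cj M2 h Y') (cj M2 h X') i j
      + mmul K (mmul M2 h I') (mmul M2 J' (madj h)) i j) = (\<lambda>i j. 0)"
  proof -
    have "cj M2 h (\<lambda>i j. mmul M2 X' Y' i j - mmul M2 Y' X' i j + mmul K I' J' i j) = cj M2 h (\<lambda>i j. 0)"
      using L(11) by simp
    thus ?thesis by (simp add: cj_add cj_diff b2 a2 cj_zero)
  qed
  have e3: "(\<lambda>i j. (mmul M1 (cj M1 g X) (madj (cj M1 g X)) i j - mmul M1 (madj (cj M1 g X)) (cj M1 g X) i j)
       + (mmul M1 (cj M1 g Y) (madj (cj M1 g Y)) i j - mmul M1 (madj (cj M1 g Y)) (cj M1 g Y) i j)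
       + mmul N (mmul M1 g I) (madj (mmul M1 g I)) i j - mmul N (madj (mmul M1 J (madj g))) (mmul M1 J (madj g)) i j
       - mmul M2 (madj S1) S1 i j)
       = (\<lambda>i j. complex_of_real \<xi> * mid M1 i j)"
  proof -
    have "cj M1 g (\<lambda>i j. (mmul M1 X (madj X) i j - mmul M1 (madj X) X i j)
       + (mmul M1 Y (madj Y) i j - mmul M1 (madj Y) Y i j)
       + mmul N I (madj I) i j - mmul N (madj J) J i j - mmul M2 (madj S) S i j)
       = cj M1 g (\<lambda>i j. complex_of_real \<xi> * mid M1 i j)"
      using L(12) by simp
    thus ?thesis by (simp add: cj_add cj_diff cj_scale b1 a3 a5 a7 cj_mid[OF g])
  qed
  have e4: "(\<lambda>i j. (mmul M2 (cj M2 h X') (madj (cj M2 h X')) i j - mmul M2 (madj (cj M2 h X')) (cj M2 h X') i j)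
       + (mmul M2 (cj M2 h Y') (madj (cj M2 h Y')) i j - mmul M2 (madj (cj M2 h Y')) (cj M2 h Y') i j)
       + mmul K (mmul M2 h I') (madj (mmul M2 h I')) i j - mmul K (madj (mmul M2 J' (madj h))) (mmul M2 J' (madj h)) i j
       + mmul M1 S1 (madj S1) i j)
       = (\<lambda>i j. complex_of_real \<xi> * mid M2 i j)"
  proof -
    have "cj M2 h (\<lambda>i j. (mmul M2 X' (madj X') i j - mmul M2 (madj X') X' i j)
       + (mmul M2 Y' (madj Y') i j - mmul M2 (madj Y') Y' i j)
       + mmul K I' (madj I') i j - mmul K (madj J') J' i j + mmul M1 S (madj S) i j)
       = cj M2 h (\<lambda>i j. complex_of_real \<xi> * mid M2 i j)"
      using L(13) by simp
    thus ?thesis by (simp add: cj_add cj_diff cj_scale b2 a4 a6 a8 cj_mid[OF h])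
  qed
  show ?thesis unfolding ge by (rule level_setI[OF m1 e1 e2 e3 e4])
qed

lemma gauge_id:
  assumes x: "x \<in> level_set N K M1 M2 \<xi>"
  shows "gauge_act N K M1 M2 (mid M1) (mid M2) x = x"
proof -
  obtain X Y I J X' Y' I' J' S where xe: "x = (X, Y, I, J, X', Y', I', J', S)"
    by (cases x) auto
  note L = level_setD[OF x[unfolded xe]]
  show ?thesis unfolding xe gauge_act_def
    using L(1-9) by (simp add: mmul_mid_left mmul_mid_right)
qed

lemma mmul_msc_left: "mmul p (msc c A) B = msc c (mmul p A B)"
  by (auto simp: mmul_def msc_def sum_distrib_left mult.assoc intro!: ext)
lemma mmul_msc_right: "mmul p A (msc c B) = msc c (mmul p A B)"
  by (auto simp: mmul_def msc_def sum_distrib_left mult.left_commute intro!: ext)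
lemma mat_in_msc: "mat_in m n A \<Longrightarrow> mat_in m n (msc c A)"
  by (auto simp: mat_in_def msc_def)

lemma torus_gauge_comm:
  "torus_act r1 r2 s1 s2 t (gauge_act N K M1 M2 g h x) = gauge_act N K M1 M2 g h (torus_act r1 r2 s1 s2 t x)"
proof -
  obtain X Y I J X' Y' I' J' S where xe: "x = (X, Y, I, J, X', Y', I', J', S)"
    by (cases x) auto
  show ?thesis by (simp add: xe gauge_act_def torus_act_def mmul_msc_left mmul_msc_right)
qed

definition dims :: "nat \<Rightarrow> nat \<Rightarrow> nat \<Rightarrow> nat \<Rightarrow> qdata \<Rightarrow> bool" where
  "dims N K M1 M2 x = (case x of (X, Y, I, J, X', Y', I', J', S) \<Rightarrow>
     mat_in M1 M1 X \<and> mat_in M1 M1 Y \<and> mat_in M1 N I \<and> mat_in N M1 J \<and>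
     mat_in M2 M2 X' \<and> mat_in M2 M2 Y' \<and> mat_in M2 K I' \<and> mat_in K M2 J' \<and>
     mat_in M2 M1 S)"

lemma level_dims: assumes "x \<in> level_set N K M1 M2 \<xi>" shows "dims N K M1 M2 x"
proof -
  obtain X Y I J X' Y' I' J' S where xe: "x = (X, Y, I, J, X', Y', I', J', S)"
    by (cases x) auto
  show ?thesis using level_setD(1-9)[OF assms[unfolded xe]] by (simp add: xe dims_def)
qed

lemma torus_dims: "dims N K M1 M2 x \<Longrightarrow> dims N K M1 M2 (torus_act r1 r2 s1 s2 t x)"
  by (cases x) (auto simp: dims_def torus_act_def intro: mat_in_msc)

lemma gauge_id_dims:
  assumes x: "dims N K M1 M2 x"
  shows "gauge_act N K M1 M2 (mid M1) (mid M2) x = x"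
proof -
  obtain X Y I J X' Y' I' J' S where xe: "x = (X, Y, I, J, X', Y', I', J', S)"
    by (cases x) auto
  have d: "mat_in M1 M1 X" "mat_in M1 M1 Y" "mat_in M1 N I" "mat_in N M1 J"
     "mat_in M2 M2 X'" "mat_in M2 M2 Y'" "mat_in M2 K I'" "mat_in K M2 J'"
     "mat_in M2 M1 S" using x by (auto simp: xe dims_def)
  show ?thesis unfolding xe gauge_act_def
    using mmul_mid_left[OF d(1)] mmul_mid_right[OF d(1)] mmul_mid_left[OF d(2)] mmul_mid_right[OF d(2)]
      mmul_mid_left[OF d(3)] mmul_mid_right[OF d(4)]
      mmul_mid_left[OF d(5)] mmul_mid_right[OF d(5)] mmul_mid_left[OF d(6)] mmul_mid_right[OF d(6)]
      mmul_mid_left[OF d(7)] mmul_mid_right[OF d(8)] mmul_mid_left[OF d(9)] mmul_mid_right[OF d(9)]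
    by simp
qed

lemma gauge_inv:
  assumes "dims N K M1 M2 x" "unitary M1 g" "unitary M2 h"
  shows "gauge_act N K M1 M2 (madj g) (madj h) (gauge_act N K M1 M2 g h x) = x"
proof -
  have "mmul M1 (madj g) g = mid M1" "mmul M2 (madj h) h = mid M2"
    using assms(2,3) unfolding unitary_def by auto
  then show ?thesis unfolding gauge_act_comp using gauge_id_dims[OF assms(1)] by simp
qed

lemma orbit_refl: "dims N K M1 M2 x \<Longrightarrow> x \<in> gauge_orbit N K M1 M2 x"
proof -
  assume "dims N K M1 M2 x"
  then have "x = gauge_act N K M1 M2 (mid M1) (mid M2) x" by (simp add: gauge_id_dims)
  then show ?thesis unfolding gauge_orbit_def using unitary_mid by blast
qed

lemma orbit_eq:
  assumes x: "dims N K M1 M2 x" and y: "y \<in> gauge_orbit N K M1 M2 x"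
  shows "gauge_orbit N K M1 M2 y = gauge_orbit N K M1 M2 x"
proof -
  obtain g h where g: "unitary M1 g" and h: "unitary M2 h" and ye: "y = gauge_act N K M1 M2 g h x"
    using y unfolding gauge_orbit_def by auto
  have xy: "x = gauge_act N K M1 M2 (madj g) (madj h) y"
    using gauge_inv[OF x g h] ye by simp
  show ?thesis
  proof
    show "gauge_orbit N K M1 M2 y \<subseteq> gauge_orbit N K M1 M2 x"
      unfolding gauge_orbit_def ye gauge_act_comp using unitary_mmul g h by blast
    show "gauge_orbit N K M1 M2 x \<subseteq> gauge_orbit N K M1 M2 y"
    proof
      fix z assume "z \<in> gauge_orbit N K M1 M2 x"
      then obtain g' h' where g': "unitary M1 g'" and h': "unitary M2 h'"
        and ze: "z = gauge_act N K M1 M2 g' h' x" unfolding gauge_orbit_def by auto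
      have "z = gauge_act N K M1 M2 (mmul M1 g' (madj g)) (mmul M2 h' (madj h)) y"
        using ze xy gauge_act_comp by metis
      moreover have "unitary M1 (mmul M1 g' (madj g))" "unitary M2 (mmul M2 h' (madj h))"
        using unitary_mmul unitary_madj g h g' h' by auto
      ultimately show "z \<in> gauge_orbit N K M1 M2 y" unfolding gauge_orbit_def by blast
    qed
  qed
qed

lemma orbit_sub_level: "x \<in> level_set N K M1 M2 \<xi> \<Longrightarrow> gauge_orbit N K M1 M2 x \<subseteq> level_set N K M1 M2 \<xi>"
  unfolding gauge_orbit_def using level_gauge by blast

lemma torus_orbit:
  "torus_act r1 r2 s1 s2 t ` gauge_orbit N K M1 M2 x = gauge_orbit N K M1 M2 (torus_act r1 r2 s1 s2 t x)"
proof (intro Set.set_eqI iffI)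
  fix z assume "z \<in> torus_act r1 r2 s1 s2 t ` gauge_orbit N K M1 M2 x"
  then obtain g h where "unitary M1 g" "unitary M2 h" "z = torus_act r1 r2 s1 s2 t (gauge_act N K M1 M2 g h x)"
    unfolding gauge_orbit_def by blast
  then show "z \<in> gauge_orbit N K M1 M2 (torus_act r1 r2 s1 s2 t x)"
    unfolding gauge_orbit_def torus_gauge_comm by blast
next
  fix z assume "z \<in> gauge_orbit N K M1 M2 (torus_act r1 r2 s1 s2 t x)"
  then obtain g h where "unitary M1 g" "unitary M2 h" "z = gauge_act N K M1 M2 g h (torus_act r1 r2 s1 s2 t x)"
    unfolding gauge_orbit_def by blast
  then have "z = torus_act r1 r2 s1 s2 t (gauge_act N K M1 M2 g h x)" "gauge_act N K M1 M2 g h x \<in> gauge_orbit N K M1 M2 x"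
    unfolding gauge_orbit_def torus_gauge_comm by auto
  then show "z \<in> torus_act r1 r2 s1 s2 t ` gauge_orbit N K M1 M2 x" by blast
qed

lemma fixed_iff:
  assumes x: "dims N K M1 M2 x"
  shows "(torus_act r1 r2 s1 s2 t ` gauge_orbit N K M1 M2 x = gauge_orbit N K M1 M2 x) \<longleftrightarrow>
         torus_act r1 r2 s1 s2 t x \<in> gauge_orbit N K M1 M2 x"
  unfolding torus_orbit
  using orbit_refl[OF torus_dims[OF x]] orbit_eq[OF x] by metis

lemma moduli_disj:
  assumes "A \<in> moduli N K M1 M2 \<xi>" "B \<in> moduli N K M1 M2 \<xi>" "z \<in> A" "z \<in> B"
  shows "A = B"
proof -
  obtain a b where a: "a \<in> level_set N K M1 M2 \<xi>" "A = gauge_orbit N K M1 M2 a"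
    and b: "b \<in> level_set N K M1 M2 \<xi>" "B = gauge_orbit N K M1 M2 b"
    using assms(1,2) unfolding moduli_def by auto
  show ?thesis using orbit_eq[OF level_dims[OF a(1)], of z] orbit_eq[OF level_dims[OF b(1)], of z]
    assms(3,4) a b by simp
qed

lemma istop_moduli:
  "istopology (\<lambda>U. U \<subseteq> moduli N K M1 M2 \<xi> \<and> openin (top_of_set (level_set N K M1 M2 \<xi>)) (\<Union>U))"
  unfolding istopology_def
proof (rule conjI; (intro allI impI))
  fix S T
  assume S: "S \<subseteq> moduli N K M1 M2 \<xi> \<and> openin (top_of_set (level_set N K M1 M2 \<xi>)) (\<Union>S)"
    and T: "T \<subseteq> moduli N K M1 M2 \<xi> \<and> openin (top_of_set (level_set N K M1 M2 \<xi>)) (\<Union>T)"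
  have "\<Union>(S \<inter> T) = \<Union>S \<inter> \<Union>T"
  proof
    show "\<Union>S \<inter> \<Union>T \<subseteq> \<Union>(S \<inter> T)"
    proof
      fix z assume "z \<in> \<Union>S \<inter> \<Union>T"
      then obtain A B where "A \<in> S" "B \<in> T" "z \<in> A" "z \<in> B" by auto
      with S T moduli_disj[of A N K M1 M2 \<xi> B z] show "z \<in> \<Union>(S \<inter> T)" by auto
    qed
  qed auto
  then show "S \<inter> T \<subseteq> moduli N K M1 M2 \<xi> \<and> openin (top_of_set (level_set N K M1 M2 \<xi>)) (\<Union>(S \<inter> T))"
    using S T by auto
next
  fix KK :: "qdata set set set"
  assume H: "\<forall>S\<in>KK. S \<subseteq> moduli N K M1 M2 \<xi> \<and> openin (top_of_set (level_set N K M1 M2 \<xi>)) (\<Union>S)"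
  have "\<Union>(\<Union>KK) = \<Union>((\<lambda>S. \<Union>S) ` KK)" by auto
  show "\<Union>KK \<subseteq> moduli N K M1 M2 \<xi> \<and> openin (top_of_set (level_set N K M1 M2 \<xi>)) (\<Union>(\<Union>KK))"
  proof
    show "\<Union>KK \<subseteq> moduli N K M1 M2 \<xi>" using H by blast
    have "openin (top_of_set (level_set N K M1 M2 \<xi>)) (\<Union>((\<lambda>S. \<Union>S) ` KK))"
      by (rule openin_Union) (use H in blast)
    then show "openin (top_of_set (level_set N K M1 M2 \<xi>)) (\<Union>(\<Union>KK))"
      using \<open>\<Union>(\<Union>KK) = \<Union>((\<lambda>S. \<Union>S) ` KK)\<close> by simp
  qed
qed

lemma openin_moduli_top:
  "openin (moduli_top N K M1 M2 \<xi>) U \<longleftrightarrow>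
     U \<subseteq> moduli N K M1 M2 \<xi> \<and> openin (top_of_set (level_set N K M1 M2 \<xi>)) (\<Union>U)"
  by (simp only: moduli_top_def topology_inverse'[OF istop_moduli])

lemma Union_moduli: "\<Union>(moduli N K M1 M2 \<xi>) = level_set N K M1 M2 \<xi>"
proof
  show "\<Union>(moduli N K M1 M2 \<xi>) \<subseteq> level_set N K M1 M2 \<xi>"
  proof
    fix x assume "x \<in> \<Union>(moduli N K M1 M2 \<xi>)"
    then obtain a where "a \<in> level_set N K M1 M2 \<xi>" "x \<in> gauge_orbit N K M1 M2 a"
      unfolding moduli_def by auto
    then show "x \<in> level_set N K M1 M2 \<xi>" using orbit_sub_level by blast
  qed
  show "level_set N K M1 M2 \<xi> \<subseteq> \<Union>(moduli N K M1 M2 \<xi>)"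
  proof
    fix x assume x: "x \<in> level_set N K M1 M2 \<xi>"
    then have "x \<in> gauge_orbit N K M1 M2 x" "gauge_orbit N K M1 M2 x \<in> moduli N K M1 M2 \<xi>"
      using orbit_refl[OF level_dims[OF x]] unfolding moduli_def by auto
    then show "x \<in> \<Union>(moduli N K M1 M2 \<xi>)" by blast
  qed
qed

lemma topspace_moduli_top: "topspace (moduli_top N K M1 M2 \<xi>) = moduli N K M1 M2 \<xi>"
proof -
  have "openin (moduli_top N K M1 M2 \<xi>) (moduli N K M1 M2 \<xi>)"
    unfolding openin_moduli_top Union_moduli by simp
  then have "moduli N K M1 M2 \<xi> \<subseteq> topspace (moduli_top N K M1 M2 \<xi>)"
    by (rule openin_subset)
  moreover have "topspace (moduli_top N K M1 M2 \<xi>) \<subseteq> moduli N K M1 M2 \<xi>"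
    using openin_topspace[of "moduli_top N K M1 M2 \<xi>"] unfolding openin_moduli_top by blast
  ultimately show ?thesis by blast
qed

lemma cont_proj:
  "continuous_map (top_of_set (level_set N K M1 M2 \<xi>)) (moduli_top N K M1 M2 \<xi>) (gauge_orbit N K M1 M2)"
  unfolding continuous_map_openin_preimage_eq topspace_moduli_top
proof (intro conjI allI impI)
  show "gauge_orbit N K M1 M2 \<in> topspace (top_of_set (level_set N K M1 M2 \<xi>)) \<rightarrow> moduli N K M1 M2 \<xi>"
    by (auto simp: moduli_def)
  fix U assume U: "openin (moduli_top N K M1 M2 \<xi>) U"
  then have U1: "U \<subseteq> moduli N K M1 M2 \<xi>" and U2: "openin (top_of_set (level_set N K M1 M2 \<xi>)) (\<Union>U)"
    unfolding openin_moduli_top by auto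
  have "topspace (top_of_set (level_set N K M1 M2 \<xi>)) \<inter> gauge_orbit N K M1 M2 -` U = \<Union>U"
  proof
    show "topspace (top_of_set (level_set N K M1 M2 \<xi>)) \<inter> gauge_orbit N K M1 M2 -` U \<subseteq> \<Union>U"
    proof
      fix x assume "x \<in> topspace (top_of_set (level_set N K M1 M2 \<xi>)) \<inter> gauge_orbit N K M1 M2 -` U"
      then have "x \<in> level_set N K M1 M2 \<xi>" "gauge_orbit N K M1 M2 x \<in> U" by auto
      then show "x \<in> \<Union>U" using orbit_refl[OF level_dims] by blast
    qed
    show "\<Union>U \<subseteq> topspace (top_of_set (level_set N K M1 M2 \<xi>)) \<inter> gauge_orbit N K M1 M2 -` U"
    proof
      fix z assume "z \<in> \<Union>U"
      then obtain A where A: "A \<in> U" "z \<in> A" by auto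
      then obtain a where a: "a \<in> level_set N K M1 M2 \<xi>" "A = gauge_orbit N K M1 M2 a"
        using U1 unfolding moduli_def by auto
      then have "gauge_orbit N K M1 M2 z = A" using orbit_eq[OF level_dims[OF a(1)]] A by simp
      moreover have "z \<in> level_set N K M1 M2 \<xi>" using orbit_sub_level a A by blast
      ultimately show "z \<in> topspace (top_of_set (level_set N K M1 M2 \<xi>)) \<inter> gauge_orbit N K M1 M2 -` U"
        using A by auto
    qed
  qed
  then show "openin (top_of_set (level_set N K M1 M2 \<xi>))
          (topspace (top_of_set (level_set N K M1 M2 \<xi>)) \<inter> gauge_orbit N K M1 M2 -` U)"
    using U2 by simp
qed

definition fixset :: "nat \<Rightarrow> nat \<Rightarrow> nat \<Rightarrow> nat \<Rightarrow> real \<Rightarrow> qdata set" where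
  "fixset N K M1 M2 \<xi> = {x \<in> level_set N K M1 M2 \<xi>. \<forall>r1 r2 s1 s2 t.
       norm r1 = 1 \<and> norm r2 = 1 \<and> norm s1 = 1 \<and> norm s2 = 1 \<and> norm t = 1 \<longrightarrow>
       torus_act r1 r2 s1 s2 t x \<in> gauge_orbit N K M1 M2 x}"

lemma reduction:
  assumes "compact (fixset N K M1 M2 \<xi>)"
  shows "compactin (moduli_top N K M1 M2 \<xi>)
           {Q \<in> moduli N K M1 M2 \<xi>. \<forall>r1 r2 s1 s2 t.
              norm r1 = 1 \<and> norm r2 = 1 \<and> norm s1 = 1 \<and> norm s2 = 1 \<and> norm t = 1 \<longrightarrow>
              torus_act r1 r2 s1 s2 t ` Q = Q}"
proof -
  have eq: "{Q \<in> moduli N K M1 M2 \<xi>. \<forall>r1 r2 s1 s2 t.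
              norm r1 = 1 \<and> norm r2 = 1 \<and> norm s1 = 1 \<and> norm s2 = 1 \<and> norm t = 1 \<longrightarrow>
              torus_act r1 r2 s1 s2 t ` Q = Q} = gauge_orbit N K M1 M2 ` fixset N K M1 M2 \<xi>"
  proof (intro Set.set_eqI iffI)
    fix Q assume Q: "Q \<in> {Q \<in> moduli N K M1 M2 \<xi>. \<forall>r1 r2 s1 s2 t.
              norm r1 = 1 \<and> norm r2 = 1 \<and> norm s1 = 1 \<and> norm s2 = 1 \<and> norm t = 1 \<longrightarrow>
              torus_act r1 r2 s1 s2 t ` Q = Q}"
    then obtain x where x: "x \<in> level_set N K M1 M2 \<xi>" "Q = gauge_orbit N K M1 M2 x"
      unfolding moduli_def by auto
    have "x \<in> fixset N K M1 M2 \<xi>"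
      unfolding fixset_def using x Q fixed_iff[OF level_dims[OF x(1)]] by auto
    then show "Q \<in> gauge_orbit N K M1 M2 ` fixset N K M1 M2 \<xi>" using x by blast
  next
    fix Q assume "Q \<in> gauge_orbit N K M1 M2 ` fixset N K M1 M2 \<xi>"
    then obtain x where x: "x \<in> fixset N K M1 M2 \<xi>" "Q = gauge_orbit N K M1 M2 x" by auto
    then have xl: "x \<in> level_set N K M1 M2 \<xi>" unfolding fixset_def by auto
    show "Q \<in> {Q \<in> moduli N K M1 M2 \<xi>. \<forall>r1 r2 s1 s2 t.
              norm r1 = 1 \<and> norm r2 = 1 \<and> norm s1 = 1 \<and> norm s2 = 1 \<and> norm t = 1 \<longrightarrow>
              torus_act r1 r2 s1 s2 t ` Q = Q}"
      using x xl fixed_iff[OF level_dims[OF xl]] unfolding fixset_def moduli_def by auto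
  qed
  have "compactin (top_of_set (level_set N K M1 M2 \<xi>)) (fixset N K M1 M2 \<xi>)"
    using assms by (auto simp: compactin_subtopology fixset_def)
  from image_compactin[OF this cont_proj] show ?thesis unfolding eq .
qed

definition q1 :: "qdata \<Rightarrow> cmat" where "q1 x = fst x"
definition q2 :: "qdata \<Rightarrow> cmat" where "q2 x = fst (snd x)"
definition q3 :: "qdata \<Rightarrow> cmat" where "q3 x = fst (snd (snd x))"
definition q4 :: "qdata \<Rightarrow> cmat" where "q4 x = fst (snd (snd (snd x)))"
definition q5 :: "qdata \<Rightarrow> cmat" where "q5 x = fst (snd (snd (snd (snd x))))"
definition q6 :: "qdata \<Rightarrow> cmat" where "q6 x = fst (snd (snd (snd (snd (snd x)))))"
definition q7 :: "qdata \<Rightarrow> cmat" where "q7 x = fst (snd (snd (snd (snd (snd (snd x))))))"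
definition q8 :: "qdata \<Rightarrow> cmat" where "q8 x = fst (snd (snd (snd (snd (snd (snd (snd x)))))))"
definition q9 :: "qdata \<Rightarrow> cmat" where "q9 x = snd (snd (snd (snd (snd (snd (snd (snd x)))))))"

lemma q_tuple: "x = (q1 x, q2 x, q3 x, q4 x, q5 x, q6 x, q7 x, q8 x, q9 x)"
  by (simp add: q1_def q2_def q3_def q4_def q5_def q6_def q7_def q8_def q9_def)

lemma cont_entry: "continuous_on S F \<Longrightarrow> continuous_on S (\<lambda>x. (F x :: cmat) i j)"
  by (rule continuous_on_product_then_coordinatewise[OF continuous_on_product_then_coordinatewise])

lemma cont_matI: "(\<And>i j. continuous_on S (\<lambda>x. F x i j)) \<Longrightarrow> continuous_on S (F :: _ \<Rightarrow> cmat)"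
  by (intro continuous_on_coordinatewise_then_product)

lemma cont_q[continuous_intros]:
  "continuous_on S (\<lambda>x. q1 x i j)" "continuous_on S (\<lambda>x. q2 x i j)" "continuous_on S (\<lambda>x. q3 x i j)"
  "continuous_on S (\<lambda>x. q4 x i j)" "continuous_on S (\<lambda>x. q5 x i j)" "continuous_on S (\<lambda>x. q6 x i j)"
  "continuous_on S (\<lambda>x. q7 x i j)" "continuous_on S (\<lambda>x. q8 x i j)" "continuous_on S (\<lambda>x. q9 x i j)"
  unfolding q1_def q2_def q3_def q4_def q5_def q6_def q7_def q8_def q9_def
  by (intro cont_entry continuous_intros)+

lemma cont_q_comp[continuous_intros]:
  assumes "continuous_on S f"
  shows "continuous_on S (\<lambda>x. q1 (f x) i j)" "continuous_on S (\<lambda>x. q2 (f x) i j)" "continuous_on S (\<lambda>x. q3 (f x) i j)"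
  "continuous_on S (\<lambda>x. q4 (f x) i j)" "continuous_on S (\<lambda>x. q5 (f x) i j)" "continuous_on S (\<lambda>x. q6 (f x) i j)"
  "continuous_on S (\<lambda>x. q7 (f x) i j)" "continuous_on S (\<lambda>x. q8 (f x) i j)" "continuous_on S (\<lambda>x. q9 (f x) i j)"
  unfolding q1_def q2_def q3_def q4_def q5_def q6_def q7_def q8_def q9_def
  by (intro cont_entry continuous_intros assms)+

lemma cont_fst_entry[continuous_intros]: "continuous_on S (\<lambda>x::cmat \<times> 'b::topological_space. fst x i j)"
  by (intro cont_entry continuous_intros)
lemma cont_snd_entry[continuous_intros]: "continuous_on S (\<lambda>x::'a::topological_space \<times> cmat. snd x i j)"
  by (intro cont_entry continuous_intros)
lemma cont_fst_fst_entry[continuous_intros]: "continuous_on S (\<lambda>x::(cmat \<times> 'b::topological_space) \<times> 'c::topological_space. fst (fst x) i j)"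
  by (intro cont_entry continuous_intros)
lemma cont_snd_fst_entry[continuous_intros]: "continuous_on S (\<lambda>x::('b::topological_space \<times> cmat) \<times> 'c::topological_space. snd (fst x) i j)"
  by (intro cont_entry continuous_intros)

lemma cont_mmul[continuous_intros]:
  assumes "\<And>i j. continuous_on S (\<lambda>x. F x i j)" "\<And>i j. continuous_on S (\<lambda>x. G x i j)"
  shows "continuous_on S (\<lambda>x. mmul p (F x) (G x) i j)"
  unfolding mmul_def by (intro continuous_intros assms)

lemma cont_madj[continuous_intros]:
  assumes "\<And>i j. continuous_on S (\<lambda>x. F x i j)"
  shows "continuous_on S (\<lambda>x. madj (F x) i j)"
  unfolding madj_def by (intro continuous_intros assms)

lemma cont_msc[continuous_intros]:
  assumes "\<And>i j. continuous_on S (\<lambda>x. F x i j)"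
  shows "continuous_on S (\<lambda>x. msc c (F x) i j)"
  unfolding msc_def by (intro continuous_intros assms)

lemma cont_const_mat[continuous_intros]: "continuous_on S (\<lambda>x. (A::cmat) i j)"
  by (rule continuous_on_const)

lemma closed_eq_mat:
  assumes "\<And>i j. continuous_on UNIV (\<lambda>x. F x i j)" "\<And>i j. continuous_on UNIV (\<lambda>x. G x i j)"
  shows "closed {x. (F x :: cmat) = G x}"
  by (rule closed_Collect_eq; rule cont_matI; fact)

lemma closed_mat_in:
  assumes "\<And>i j. continuous_on UNIV (\<lambda>x. F x i j)"
  shows "closed {x. mat_in m n (F x)}"
proof -
  have "{x. mat_in m n (F x)} = (\<Inter>p\<in>{p. m \<le> fst p \<or> n \<le> snd p}. {x. F x (fst p) (snd p) = 0})"
    by (auto simp: mat_in_def)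
  then show ?thesis
    by (auto intro!: closed_INT closed_Collect_eq continuous_intros assms)
qed

lemma closed_unitary:
  assumes "\<And>i j. continuous_on UNIV (\<lambda>x. F x i j)"
  shows "closed {x. unitary m (F x)}"
proof -
  have "{x. unitary m (F x)} = {x. mat_in m m (F x)} \<inter> {x. mmul m (F x) (madj (F x)) = mid m}
     \<inter> {x. mmul m (madj (F x)) (F x) = mid m}"
    by (auto simp: unitary_def)
  then show ?thesis
    by (auto intro!: closed_Int closed_mat_in closed_eq_mat continuous_intros assms)
qed

lemma level_closed: "closed (level_set N K M1 M2 \<xi>)"
proof -
  have "level_set N K M1 M2 \<xi> = {x. (q1 x, q2 x, q3 x, q4 x, q5 x, q6 x, q7 x, q8 x, q9 x) \<in> level_set N K M1 M2 \<xi>}"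
    using q_tuple by auto
  also have "\<dots> = {x. mat_in M1 M1 (q1 x)} \<inter> {x. mat_in M1 M1 (q2 x)} \<inter> {x. mat_in M1 N (q3 x)}
      \<inter> {x. mat_in N M1 (q4 x)} \<inter> {x. mat_in M2 M2 (q5 x)} \<inter> {x. mat_in M2 M2 (q6 x)}
      \<inter> {x. mat_in M2 K (q7 x)} \<inter> {x. mat_in K M2 (q8 x)} \<inter> {x. mat_in M2 M1 (q9 x)}
      \<inter> {x. (\<lambda>i j. mmul M1 (q1 x) (q2 x) i j - mmul M1 (q2 x) (q1 x) i j + mmul N (q3 x) (q4 x) i j) = (\<lambda>i j. 0)}
      \<inter> {x. (\<lambda>i j. mmul M2 (q5 x) (q6 x) i j - mmul M2 (q6 x) (q5 x) i j + mmul K (q7 x) (q8 x) i j) = (\<lambda>i j. 0)}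
      \<inter> {x. (\<lambda>i j. (mmul M1 (q1 x) (madj (q1 x)) i j - mmul M1 (madj (q1 x)) (q1 x) i j)
       + (mmul M1 (q2 x) (madj (q2 x)) i j - mmul M1 (madj (q2 x)) (q2 x) i j)
       + mmul N (q3 x) (madj (q3 x)) i j - mmul N (madj (q4 x)) (q4 x) i j - mmul M2 (madj (q9 x)) (q9 x) i j)
       = (\<lambda>i j. complex_of_real \<xi> * mid M1 i j)}
      \<inter> {x. (\<lambda>i j. (mmul M2 (q5 x) (madj (q5 x)) i j - mmul M2 (madj (q5 x)) (q5 x) i j)
       + (mmul M2 (q6 x) (madj (q6 x)) i j - mmul M2 (madj (q6 x)) (q6 x) i j)
       + mmul K (q7 x) (madj (q7 x)) i j - mmul K (madj (q8 x)) (q8 x) i j + mmul M1 (q9 x) (madj (q9 x)) i j)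
       = (\<lambda>i j. complex_of_real \<xi> * mid M2 i j)}"
    (is "?A = ?B")
  proof (intro Set.set_eqI iffI)
    fix x assume "x \<in> ?A"
    then show "x \<in> ?B" using level_setD[of "q1 x" "q2 x" "q3 x" "q4 x" "q5 x" "q6 x" "q7 x" "q8 x" "q9 x"] by auto
  next
    fix x assume "x \<in> ?B"
    then show "x \<in> ?A" using level_setI[of M1 "q1 x" "q2 x" N "q3 x" "q4 x" M2 "q5 x" "q6 x" K "q7 x" "q8 x" "q9 x"]
      by auto
  qed
  finally show ?thesis
    by (simp only:) (intro closed_Int closed_mat_in closed_eq_mat continuous_intros)
qed

definition BoxS :: "real \<Rightarrow> cmat set" where
  "BoxS B = {A. \<forall>i j. cmod (A i j) \<le> B}"

definition BoxQ :: "real \<Rightarrow> qdata set" where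
  "BoxQ B = BoxS B \<times> BoxS B \<times> BoxS B \<times> BoxS B \<times> BoxS B \<times> BoxS B \<times> BoxS B \<times> BoxS B \<times> BoxS B"

lemma compact_PiE_UNIV:
  fixes S :: "'i \<Rightarrow> ('b::topological_space) set"
  assumes "\<And>i. compact (S i)"
  shows "compact (PiE UNIV S)"
proof -
  have "compactin (product_topology (\<lambda>i. euclidean) UNIV) (PiE UNIV S)"
    using assms by (simp add: compactin_PiE)
  then show ?thesis by (simp add: euclidean_product_topology)
qed

lemma compact_BoxS: "compact (BoxS B)"
proof -
  have "BoxS B = PiE UNIV (\<lambda>_. PiE UNIV (\<lambda>_. cball (0::complex) B))"
    by (auto simp: BoxS_def PiE_UNIV_domain Pi_iff dist_norm)
  then show ?thesis
    by (simp add: compact_PiE_UNIV)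
qed

lemma compact_BoxQ: "compact (BoxQ B)"
  unfolding BoxQ_def by (intro compact_Times compact_BoxS)

lemma unitary_bound:
  assumes "unitary m g" shows "cmod (g i j) \<le> 1"
proof (cases "i < m \<and> j < m")
  case True
  have g: "mat_in m m g" "mmul m g (madj g) = mid m" using assms unfolding unitary_def by auto
  have "(\<Sum>k<m. (cmod (g i k))\<^sup>2) = 1"
  proof -
    have "complex_of_real (\<Sum>k<m. (cmod (g i k))\<^sup>2) = (\<Sum>k<m. g i k * cnj (g i k))"
      by (simp add: complex_mult_cnj cmod_power2)
    also have "\<dots> = mmul m g (madj g) i i" by (simp add: mmul_def madj_def)
    also have "\<dots> = 1" using g True by (simp add: mid_def)
    finally show ?thesis using of_real_eq_1_iff by blast
  qed
  moreover have "(cmod (g i j))\<^sup>2 \<le> (\<Sum>k<m. (cmod (g i k))\<^sup>2)"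
    using True by (intro member_le_sum) auto
  ultimately have "(cmod (g i j))\<^sup>2 \<le> 1" by simp
  then show ?thesis by (simp add: power_le_one_iff abs_le_square_iff)
next
  case False
  then have "g i j = 0" using assms unfolding unitary_def mat_in_def by auto
  then show ?thesis by simp
qed

lemma gauge_q: "gauge_act N K M1 M2 g h x = (mmul M1 (mmul M1 g (q1 x)) (madj g), mmul M1 (mmul M1 g (q2 x)) (madj g),
      mmul M1 g (q3 x), mmul M1 (q4 x) (madj g),
      mmul M2 (mmul M2 h (q5 x)) (madj h), mmul M2 (mmul M2 h (q6 x)) (madj h),
      mmul M2 h (q7 x), mmul M2 (q8 x) (madj h),
      mmul M1 (mmul M2 h (q9 x)) (madj g))"
  by (subst q_tuple) (simp add: gauge_act_def)

lemma torus_q: "torus_act r1 r2 s1 s2 t x =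
     (msc r1 (q1 x), msc r2 (q2 x), q3 x, msc (r1 * r2) (q4 x), msc s1 (q5 x), msc s2 (q6 x), q7 x,
      msc (s1 * s2) (q8 x), msc t (q9 x))"
  by (subst q_tuple) (simp add: torus_act_def)

lemma compact_UU: "compact {p::cmat \<times> cmat. unitary M1 (fst p) \<and> unitary M2 (snd p)}"
proof -
  have "{p::cmat \<times> cmat. unitary M1 (fst p) \<and> unitary M2 (snd p)} = (BoxS 1 \<times> BoxS 1) \<inter> ({p. unitary M1 (fst p)} \<inter> {p. unitary M2 (snd p)})"
    unfolding BoxS_def using unitary_bound by auto
  moreover have "closed ({p::cmat \<times> cmat. unitary M1 (fst p)} \<inter> {p. unitary M2 (snd p)})"
    by (intro closed_Int closed_unitary continuous_intros)
  ultimately show ?thesis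
    using compact_Int_closed[OF compact_Times[OF compact_BoxS compact_BoxS]] by simp
qed

lemma closed_graph_fix: "closed {p::(cmat \<times> cmat) \<times> qdata.
     gauge_act N K M1 M2 (fst (fst p)) (snd (fst p)) (snd p) = torus_act r1 r2 s1 s2 t (snd p)}"
proof -
  show ?thesis
    unfolding gauge_q torus_q prod_eq_iff fst_conv snd_conv Collect_conj_eq
    by (intro closed_Int closed_eq_mat continuous_intros)
qed

lemma closed_fix:
  "closed {x. \<exists>g h. unitary M1 g \<and> unitary M2 h \<and> gauge_act N K M1 M2 g h x = torus_act r1 r2 s1 s2 t x}"
proof -
  define UU where "UU = {p::cmat \<times> cmat. unitary M1 (fst p) \<and> unitary M2 (snd p)}"
  have cUU: "compact UU" unfolding UU_def by (rule compact_UU)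
  define Z where "Z = {p::(cmat \<times> cmat) \<times> qdata. fst p \<in> UU \<and>
     gauge_act N K M1 M2 (fst (fst p)) (snd (fst p)) (snd p) = torus_act r1 r2 s1 s2 t (snd p)}"
  have Ze: "Z = (UU \<times> UNIV) \<inter> {p::(cmat \<times> cmat) \<times> qdata.
     gauge_act N K M1 M2 (fst (fst p)) (snd (fst p)) (snd p) = torus_act r1 r2 s1 s2 t (snd p)}"
    unfolding Z_def by (rule Set.set_eqI) (simp add: mem_Times_iff)
  have "closedin (top_of_set (UU \<times> UNIV)) Z"
    unfolding Ze by (rule closedin_closed_Int[OF closed_graph_fix])
  moreover have "top_of_set (UU \<times> (UNIV :: qdata set)) = prod_topology (top_of_set UU) euclidean"
    using subtopology_Times[of euclidean euclidean UU "UNIV :: qdata set"]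
    by (simp only: prod_topology_euclidean subtopology_UNIV)
  ultimately have cl: "closedin (prod_topology (top_of_set UU) euclidean) Z" by simp
  have "compact_space (top_of_set UU)"
    using cUU by (simp add: compact_space_subtopology)
  then have "closed_map (prod_topology (top_of_set UU) euclidean) euclidean snd"
    by (rule closed_map_snd)
  then have "closedin euclidean (snd ` Z)"
    using cl unfolding closed_map_def by blast
  then have c1: "closed (snd ` Z)" by (simp only: closed_closedin)
  have eqZ: "snd ` Z = {x. \<exists>g h. unitary M1 g \<and> unitary M2 h \<and> gauge_act N K M1 M2 g h x = torus_act r1 r2 s1 s2 t x}"
  proof (intro Set.set_eqI iffI)
    fix x assume "x \<in> snd ` Z"
    then obtain p where "p \<in> Z" "x = snd p" by blast
    then show "x \<in> {x. \<exists>g h. unitary M1 g \<and> unitary M2 h \<and> gauge_act N K M1 M2 g h x = torus_act r1 r2 s1 s2 t x}"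
      unfolding Z_def UU_def by blast
  next
    fix x assume "x \<in> {x. \<exists>g h. unitary M1 g \<and> unitary M2 h \<and> gauge_act N K M1 M2 g h x = torus_act r1 r2 s1 s2 t x}"
    then obtain g h where "unitary M1 g" "unitary M2 h" "gauge_act N K M1 M2 g h x = torus_act r1 r2 s1 s2 t x"
      by blast
    then have "((g, h), x) \<in> Z" unfolding Z_def UU_def by simp
    then show "x \<in> snd ` Z" by force
  qed
  show ?thesis using c1 unfolding eqZ .
qed

lemma fixset_alt: "fixset N K M1 M2 \<xi> = level_set N K M1 M2 \<xi> \<inter>
   (\<Inter>r\<in>{r. norm (fst r) = 1 \<and> norm (fst (snd r)) = 1 \<and> norm (fst (snd (snd r))) = 1 \<and>
       norm (fst (snd (snd (snd r)))) = 1 \<and> norm (snd (snd (snd (snd r)))) = 1}.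
    {x. \<exists>g h. unitary M1 g \<and> unitary M2 h \<and> gauge_act N K M1 M2 g h x =
       torus_act (fst r) (fst (snd r)) (fst (snd (snd r))) (fst (snd (snd (snd r)))) (snd (snd (snd (snd r)))) x})"
  (is "?F = ?L \<inter> (\<Inter>r\<in>?R. ?P r)")
proof (intro Set.set_eqI iffI)
  fix x assume x: "x \<in> ?F"
  then have xl: "x \<in> ?L" and
    H: "\<And>r1 r2 s1 s2 t. norm r1 = 1 \<Longrightarrow> norm r2 = 1 \<Longrightarrow> norm s1 = 1 \<Longrightarrow> norm s2 = 1 \<Longrightarrow> norm t = 1 \<Longrightarrow>
       torus_act r1 r2 s1 s2 t x \<in> gauge_orbit N K M1 M2 x"
    unfolding fixset_def by auto
  show "x \<in> ?L \<inter> (\<Inter>r\<in>?R. ?P r)"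
  proof (intro IntI INT_I xl)
    fix r assume r: "r \<in> ?R"
    obtain r1 r2 s1 s2 t where re: "r = (r1, r2, s1, s2, t)" by (cases r) auto
    have "torus_act r1 r2 s1 s2 t x \<in> gauge_orbit N K M1 M2 x" using H r re by simp
    then obtain g h where "unitary M1 g" "unitary M2 h" "torus_act r1 r2 s1 s2 t x = gauge_act N K M1 M2 g h x"
      unfolding gauge_orbit_def by blast
    then show "x \<in> ?P r" unfolding re by auto
  qed
next
  fix x assume x: "x \<in> ?L \<inter> (\<Inter>r\<in>?R. ?P r)"
  have "torus_act r1 r2 s1 s2 t x \<in> gauge_orbit N K M1 M2 x"
    if "norm r1 = 1" "norm r2 = 1" "norm s1 = 1" "norm s2 = 1" "norm t = 1" for r1 r2 s1 s2 t
  proof -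
    have "(r1, r2, s1, s2, t) \<in> ?R" using that by simp
    then have "x \<in> ?P (r1, r2, s1, s2, t)" using x by blast
    then obtain g h where "unitary M1 g" "unitary M2 h" "gauge_act N K M1 M2 g h x = torus_act r1 r2 s1 s2 t x"
      by auto
    then show ?thesis unfolding gauge_orbit_def by (metis (mono_tags, lifting) mem_Collect_eq)
  qed
  then show "x \<in> ?F" using x unfolding fixset_def by blast
qed

lemma fixset_compact:
  assumes "fixset N K M1 M2 \<xi> \<subseteq> BoxQ B"
  shows "compact (fixset N K M1 M2 \<xi>)"
proof -
  have "closed (fixset N K M1 M2 \<xi>)"
    unfolding fixset_alt by (intro closed_Int level_closed closed_INT ballI closed_fix)
  then have "compact (BoxQ B \<inter> fixset N K M1 M2 \<xi>)"
    by (rule compact_Int_closed[OF compact_BoxQ])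
  then show ?thesis using assms by (simp add: Int_absorb1)
qed

lemma flow_identity:
  fixes w :: "'v \<Rightarrow> 'v \<Rightarrow> real"
  assumes fin: "finite V" and AV: "A \<subseteq> V"
    and eq: "\<forall>p\<in>V. (\<Sum>q\<in>V. w p q) - (\<Sum>q\<in>V. w q p) + inn p - out p = \<xi>"
  shows "\<xi> * card A = (\<Sum>p\<in>A. \<Sum>q\<in>V-A. w p q) - (\<Sum>p\<in>A. \<Sum>q\<in>V-A. w q p)
           + (\<Sum>p\<in>A. inn p) - (\<Sum>p\<in>A. out p)"
proof -
  have split: "\<And>f. (\<Sum>q\<in>V. f q) = (\<Sum>q\<in>A. f q) + (\<Sum>q\<in>V-A. f q)"
    using sum.subset_diff[OF AV fin] by (simp add: add.commute)
  have "\<xi> * card A = (\<Sum>p\<in>A. \<xi>)" by simp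
  also have "\<dots> = (\<Sum>p\<in>A. ((\<Sum>q\<in>A. w p q) + (\<Sum>q\<in>V-A. w p q)) - ((\<Sum>q\<in>A. w q p) + (\<Sum>q\<in>V-A. w q p)) + inn p - out p)"
    using eq AV by (intro sum.cong) (auto simp: split[symmetric])
  also have "\<dots> = (\<Sum>p\<in>A. \<Sum>q\<in>A. w p q) - (\<Sum>p\<in>A. \<Sum>q\<in>A. w q p) + (\<Sum>p\<in>A. \<Sum>q\<in>V-A. w p q) - (\<Sum>p\<in>A. \<Sum>q\<in>V-A. w q p)
           + (\<Sum>p\<in>A. inn p) - (\<Sum>p\<in>A. out p)"
    by (simp add: sum.distrib sum_subtractf algebra_simps)
  also have "(\<Sum>p\<in>A. \<Sum>q\<in>A. w q p) = (\<Sum>p\<in>A. \<Sum>q\<in>A. w p q)"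
    by (rule sum.swap)
  finally show ?thesis by simp
qed

lemma flow_pos:
  fixes w :: "'v \<Rightarrow> 'v \<Rightarrow> real" and \<delta> :: "'v \<Rightarrow> complex"
  assumes fin: "finite V"
    and wnn: "\<And>p q. w p q \<ge> 0" and inn_nn: "\<And>p. inn p \<ge> 0" and out_nn: "\<And>p. out p \<ge> 0"
    and eq: "\<forall>p\<in>V. (\<Sum>q\<in>V. w p q) - (\<Sum>q\<in>V. w q p) + inn p - out p = \<xi>"
    and xi: "\<xi> > 0"
    and cw: "\<And>p q. p \<in> V \<Longrightarrow> q \<in> V \<Longrightarrow> w p q \<noteq> 0 \<Longrightarrow> \<delta> p = \<omega> * \<delta> q"
    and ci: "\<And>p. p \<in> V \<Longrightarrow> inn p \<noteq> 0 \<Longrightarrow> \<delta> p = 1"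
    and co: "\<And>p. p \<in> V \<Longrightarrow> out p \<noteq> 0 \<Longrightarrow> \<delta> p = \<beta>"
    and om: "\<And>n. n > 0 \<Longrightarrow> \<omega> ^ n \<noteq> 1" and om0: "\<omega> \<noteq> 0"
    and be: "\<And>n. \<beta> \<noteq> \<omega> ^ n"
  shows "\<forall>p\<in>V. \<forall>q\<in>V. w p q \<le> \<xi> * card V" "\<forall>p\<in>V. inn p \<le> \<xi> * card V" "\<forall>p\<in>V. out p = 0"
proof -
  define L where "L = {p\<in>V. \<forall>n. \<delta> p \<noteq> \<omega> ^ n}"
  have LV: "L \<subseteq> V" unfolding L_def by auto
  have in0: "(\<Sum>p\<in>L. \<Sum>q\<in>V-L. w p q) = 0"
  proof (intro sum.neutral ballI)
    fix p q assume p: "p \<in> L" and q: "q \<in> V - L"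
    show "w p q = 0"
    proof (rule ccontr)
      assume "w p q \<noteq> 0"
      then have "\<delta> p = \<omega> * \<delta> q" using cw p q LV by auto
      moreover obtain n where "\<delta> q = \<omega> ^ n" using q unfolding L_def by auto
      ultimately have "\<delta> p = \<omega> ^ Suc n" by simp
      then show False using p unfolding L_def by blast
    qed
  qed
  have inn0: "(\<Sum>p\<in>L. inn p) = 0"
  proof (intro sum.neutral ballI)
    fix p assume p: "p \<in> L"
    show "inn p = 0"
    proof (rule ccontr)
      assume "inn p \<noteq> 0"
      then have "\<delta> p = \<omega> ^ 0" using ci p LV by auto
      then show False using p unfolding L_def by blast
    qed
  qed
  have "\<xi> * card L = (\<Sum>p\<in>L. \<Sum>q\<in>V-L. w p q) - (\<Sum>p\<in>L. \<Sum>q\<in>V-L. w q p)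
           + (\<Sum>p\<in>L. inn p) - (\<Sum>p\<in>L. out p)"
    by (rule flow_identity[OF fin LV eq])
  also have "\<dots> = - (\<Sum>p\<in>L. \<Sum>q\<in>V-L. w q p) - (\<Sum>p\<in>L. out p)" using in0 inn0 by simp
  also have "\<dots> \<le> 0"
    using wnn out_nn by (smt (verit) sum_nonneg)
  finally have "card L = 0" using xi
    by (smt (verit) of_nat_0_le_iff of_nat_0_less_iff mult_pos_pos not_gr0)
  moreover have "finite L" using fin LV finite_subset by blast
  ultimately have "L = {}" by simp
  then have pw: "\<And>p. p \<in> V \<Longrightarrow> \<exists>n. \<delta> p = \<omega> ^ n" unfolding L_def by blast
  have out0: "\<And>p. p \<in> V \<Longrightarrow> out p = 0"
  proof (rule ccontr)
    fix p assume p: "p \<in> V" and "out p \<noteq> 0"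
    then have "\<delta> p = \<beta>" using co by auto
    then show False using pw[OF p] be by metis
  qed
  show "\<forall>p\<in>V. out p = 0" using out0 by auto
  have main: "inn p0 \<le> \<xi> * card V \<and> (\<forall>q0\<in>V. w p0 q0 \<le> \<xi> * card V)" if p0: "p0 \<in> V" for p0
  proof -
    define A where "A = {p\<in>V. \<exists>n. \<delta> p = \<omega> ^ n * \<delta> p0}"
    have AV: "A \<subseteq> V" unfolding A_def by auto
    have p0A: "p0 \<in> A" unfolding A_def using p0 by (auto intro: exI[of _ 0])
    have d0: "\<delta> p0 \<noteq> 0" using pw[OF p0] om0 by auto
    have outfl: "(\<Sum>p\<in>A. \<Sum>q\<in>V-A. w q p) = 0"
    proof (intro sum.neutral ballI)
      fix p q assume p: "p \<in> A" and q: "q \<in> V - A"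
      show "w q p = 0"
      proof (rule ccontr)
        assume "w q p \<noteq> 0"
        then have "\<delta> q = \<omega> * \<delta> p" using cw p q AV by auto
        moreover obtain n where "\<delta> p = \<omega> ^ n * \<delta> p0" using p unfolding A_def by auto
        ultimately have "\<delta> q = \<omega> ^ Suc n * \<delta> p0" by simp
        then show False using q unfolding A_def by blast
      qed
    qed
    have outA: "(\<Sum>p\<in>A. out p) = 0" using out0 AV by (auto intro: sum.neutral)
    have fA: "\<xi> * card A = (\<Sum>p\<in>A. \<Sum>q\<in>V-A. w p q) + (\<Sum>p\<in>A. inn p)"
      using flow_identity[OF fin AV eq] outfl outA by simp
    have cA: "\<xi> * card A \<le> \<xi> * card V"
      using card_mono[OF fin AV] xi by simp
    have finA: "finite A" using fin AV finite_subset by auto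
    have s1: "0 \<le> (\<Sum>p\<in>A. \<Sum>q\<in>V-A. w p q)" using wnn by (intro sum_nonneg) auto
    have s2: "0 \<le> (\<Sum>p\<in>A. inn p)" using inn_nn by (intro sum_nonneg) auto
    have "inn p0 \<le> (\<Sum>p\<in>A. inn p)" using p0A finA inn_nn by (intro member_le_sum) auto
    then have r1: "inn p0 \<le> \<xi> * card V" using fA cA s1 by linarith
    have r2: "w p0 q0 \<le> \<xi> * card V" if q0: "q0 \<in> V" for q0
    proof (cases "w p0 q0 = 0")
      case True then show ?thesis using xi by simp
    next
      case False
      then have dq: "\<delta> p0 = \<omega> * \<delta> q0" using cw p0 q0 by auto
      have q0A: "q0 \<notin> A"
      proof
        assume "q0 \<in> A"
        then obtain n where "\<delta> q0 = \<omega> ^ n * \<delta> p0" unfolding A_def by auto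
        then have "\<delta> p0 = \<omega> ^ Suc n * \<delta> p0" using dq by (metis mult.assoc power_Suc)
        then have "\<omega> ^ Suc n * \<delta> p0 = 1 * \<delta> p0" by simp
        then have "\<omega> ^ Suc n = 1" using d0 by (metis mult_cancel_right)
        then show False using om[of "Suc n"] by simp
      qed
      have "w p0 q0 \<le> (\<Sum>q\<in>V-A. w p0 q)" using q0 q0A fin wnn by (intro member_le_sum) auto
      also have "\<dots> \<le> (\<Sum>p\<in>A. \<Sum>q\<in>V-A. w p q)"
        using p0A finA wnn by (intro member_le_sum[where f = "\<lambda>p. \<Sum>q\<in>V-A. w p q"] sum_nonneg) auto
      finally show ?thesis using fA cA s2 by linarith
    qed
    show ?thesis using r1 r2 by auto
  qed
  show "\<forall>p\<in>V. \<forall>q\<in>V. w p q \<le> \<xi> * card V" using main by auto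
  show "\<forall>p\<in>V. inn p \<le> \<xi> * card V" using main by auto
qed

lemma flow_bound:
  fixes w :: "'v \<Rightarrow> 'v \<Rightarrow> real" and \<delta> :: "'v \<Rightarrow> complex"
  assumes fin: "finite V"
    and wnn: "\<And>p q. w p q \<ge> 0" and inn_nn: "\<And>p. inn p \<ge> 0" and out_nn: "\<And>p. out p \<ge> 0"
    and eq: "\<forall>p\<in>V. (\<Sum>q\<in>V. w p q) - (\<Sum>q\<in>V. w q p) + inn p - out p = \<xi>"
    and xi: "\<xi> \<noteq> 0"
    and cw: "\<And>p q. p \<in> V \<Longrightarrow> q \<in> V \<Longrightarrow> w p q \<noteq> 0 \<Longrightarrow> \<delta> p = \<omega> * \<delta> q"
    and ci: "\<And>p. p \<in> V \<Longrightarrow> inn p \<noteq> 0 \<Longrightarrow> \<delta> p = 1"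
    and co: "\<And>p. p \<in> V \<Longrightarrow> out p \<noteq> 0 \<Longrightarrow> \<delta> p = \<beta>"
    and om: "\<And>n. n > 0 \<Longrightarrow> \<omega> ^ n \<noteq> 1" and om0: "\<omega> \<noteq> 0"
    and be: "\<And>n. \<beta> \<noteq> \<omega> ^ n" and be0: "\<beta> \<noteq> 0"
    and d0: "\<And>p. p \<in> V \<Longrightarrow> \<delta> p \<noteq> 0"
  shows "\<forall>p\<in>V. \<forall>q\<in>V. w p q \<le> \<bar>\<xi>\<bar> * card V" "\<forall>p\<in>V. inn p \<le> \<bar>\<xi>\<bar> * card V"
     "\<forall>p\<in>V. out p \<le> \<bar>\<xi>\<bar> * card V"
proof -
  have "(\<forall>p\<in>V. \<forall>q\<in>V. w p q \<le> \<bar>\<xi>\<bar> * card V) \<and> (\<forall>p\<in>V. inn p \<le> \<bar>\<xi>\<bar> * card V)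
     \<and> (\<forall>p\<in>V. out p \<le> \<bar>\<xi>\<bar> * card V)"
  proof (cases "\<xi> > 0")
    case True
    note r = flow_pos[where w=w and inn=inn and out=out and \<delta>=\<delta> and \<omega>=\<omega> and \<beta>=\<beta> and \<xi>=\<xi>,
        OF fin wnn inn_nn out_nn eq True cw ci co om om0 be]
    have z: "0 \<le> \<xi> * card V" using True by simp
    have a: "\<bar>\<xi>\<bar> = \<xi>" using True by simp
    show ?thesis unfolding a
    proof (intro conjI ballI)
      fix p q assume "p \<in> V" "q \<in> V" then show "w p q \<le> \<xi> * card V" using r(1) by blast
    next
      fix p assume "p \<in> V" then show "inn p \<le> \<xi> * card V" using r(2) by blast
    next
      fix p assume "p \<in> V" then show "out p \<le> \<xi> * card V" using r(3) z by simp
    qed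
  next
    case False
    then have xn: "- \<xi> > 0" using xi by simp
    define w' where "w' = (\<lambda>p q. w q p)"
    define \<delta>' where "\<delta>' = (\<lambda>p. \<beta> / \<delta> p)"
    have eq': "\<forall>p\<in>V. (\<Sum>q\<in>V. w' p q) - (\<Sum>q\<in>V. w' q p) + out p - inn p = - \<xi>"
    proof
      fix p assume "p \<in> V"
      then have "(\<Sum>q\<in>V. w p q) - (\<Sum>q\<in>V. w q p) + inn p - out p = \<xi>" using eq by blast
      then show "(\<Sum>q\<in>V. w' p q) - (\<Sum>q\<in>V. w' q p) + out p - inn p = - \<xi>"
        unfolding w'_def by linarith
    qed
    have cw': "\<delta>' p = \<omega> * \<delta>' q" if "p \<in> V" "q \<in> V" "w' p q \<noteq> 0" for p q
    proof -
      have "\<delta> q = \<omega> * \<delta> p" using cw[of q p] that unfolding w'_def by auto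
      then have "\<beta> / \<delta> p = \<omega> * (\<beta> / \<delta> q)"
        using d0[OF that(1)] d0[OF that(2)] om0 by (simp add: divide_simps)
      then show ?thesis unfolding \<delta>'_def .
    qed
    have ci': "\<delta>' p = 1" if "p \<in> V" "out p \<noteq> 0" for p
      using co[OF that] be0 unfolding \<delta>'_def by simp
    have co': "\<delta>' p = \<beta>" if "p \<in> V" "inn p \<noteq> 0" for p
      using ci[OF that] unfolding \<delta>'_def by simp
    have wnn': "\<And>p q. w' p q \<ge> 0" unfolding w'_def using wnn by simp
    note r = flow_pos[where w=w' and inn=out and out=inn and \<delta>=\<delta>' and \<omega>=\<omega> and \<beta>=\<beta> and \<xi>="-\<xi>",
        OF fin wnn' out_nn inn_nn eq' xn cw' ci' co' om om0 be]
    have z: "0 \<le> - \<xi> * card V" using xn by (intro mult_nonneg_nonneg) auto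
    have a: "\<bar>\<xi>\<bar> = - \<xi>" using xn by simp
    show ?thesis unfolding a
    proof (intro conjI ballI)
      fix p q assume "p \<in> V" "q \<in> V" then show "w p q \<le> - \<xi> * card V" using r(1) unfolding w'_def by blast
    next
      fix p assume "p \<in> V" then show "inn p \<le> - \<xi> * card V" using r(3) z by simp
    next
      fix p assume "p \<in> V" then show "out p \<le> - \<xi> * card V" using r(2) by blast
    qed
  qed
  then show "\<forall>p\<in>V. \<forall>q\<in>V. w p q \<le> \<bar>\<xi>\<bar> * card V" "\<forall>p\<in>V. inn p \<le> \<bar>\<xi>\<bar> * card V"
     "\<forall>p\<in>V. out p \<le> \<bar>\<xi>\<bar> * card V" by auto
qed

lemma eigvec_exists:
  fixes g :: cmat
  assumes n: "0 < n"
  shows "\<exists>v lam. (\<exists>i<n. v i \<noteq> 0) \<and> (\<forall>i. n \<le> i \<longrightarrow> v i = 0) \<and>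
           (\<forall>i<n. (\<Sum>j<n. g i j * v j) = lam * v i)"
proof -
  define A :: "complex mat" where "A = mat n n (\<lambda>(i, j). g i j)"
  have A: "A \<in> carrier_mat n n" unfolding A_def by simp
  have "degree (char_poly A) = n" using degree_monic_char_poly[OF A] by simp
  then have "\<not> constant (poly (char_poly A))" using n by (simp add: constant_degree)
  then obtain z where "poly (char_poly A) z = 0" using fundamental_theorem_of_algebra by blast
  then have "eigenvalue A z" using eigenvalue_root_char_poly[OF A] by simp
  then obtain v where ev: "eigenvector A v z" unfolding eigenvalue_def by blast
  then have v: "v \<in> carrier_vec n" and v0: "v \<noteq> 0\<^sub>v n" and Av: "A *\<^sub>v v = z \<cdot>\<^sub>v v"
    unfolding eigenvector_def using A by auto
  define vf where "vf = (\<lambda>i. if i < n then v $ i else 0)"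
  have "\<exists>i<n. vf i \<noteq> 0"
  proof (rule ccontr)
    assume "\<not> (\<exists>i<n. vf i \<noteq> 0)"
    then have "v = 0\<^sub>v n" using v unfolding vf_def by (auto simp: vec_eq_iff)
    then show False using v0 by simp
  qed
  moreover have "\<forall>i. n \<le> i \<longrightarrow> vf i = 0" unfolding vf_def by simp
  moreover have "\<forall>i<n. (\<Sum>j<n. g i j * vf j) = z * vf i"
  proof (intro allI impI)
    fix i assume i: "i < n"
    have "(A *\<^sub>v v) $ i = (\<Sum>j<n. g i j * vf j)"
      using i v unfolding A_def vf_def
      by (auto simp: scalar_prod_def atLeast0LessThan intro!: sum.cong)
    moreover have "(A *\<^sub>v v) $ i = z * vf i" using Av i v unfolding vf_def by simp
    ultimately show "(\<Sum>j<n. g i j * vf j) = z * vf i" by simp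
  qed
  ultimately show ?thesis by blast
qed

definition outer :: "(nat \<Rightarrow> complex) \<Rightarrow> cmat" where
  "outer w = (\<lambda>i j. w i * cnj (w j))"

definition nsq :: "nat \<Rightarrow> (nat \<Rightarrow> complex) \<Rightarrow> real" where
  "nsq m w = (\<Sum>k<m. (cmod (w k))\<^sup>2)"

definition hh :: "nat \<Rightarrow> (nat \<Rightarrow> complex) \<Rightarrow> cmat" where
  "hh m w = (\<lambda>i j. mid m i j - complex_of_real (2 / nsq m w) * outer w i j)"

lemma mmul_outer: "mmul m (outer w) (outer w) = (\<lambda>i j. complex_of_real (nsq m w) * outer w i j)"
proof (rule ext, rule ext)
  fix i j
  have "mmul m (outer w) (outer w) i j = (\<Sum>k<m. complex_of_real ((cmod (w k))\<^sup>2)) * (w i * cnj (w j))"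
    unfolding mmul_def outer_def sum_distrib_right
  proof (intro sum.cong refl)
    fix k
    have "w k * cnj (w k) = complex_of_real ((cmod (w k))\<^sup>2)" by (simp add: complex_mult_cnj cmod_power2)
    then show "w i * cnj (w k) * (w k * cnj (w j)) = complex_of_real ((cmod (w k))\<^sup>2) * (w i * cnj (w j))"
      by (metis mult.assoc mult.commute mult.left_commute)
  qed
  then show "mmul m (outer w) (outer w) i j = complex_of_real (nsq m w) * outer w i j"
    by (simp add: nsq_def outer_def)
qed

lemma mat_in_outer: "(\<forall>i. m \<le> i \<longrightarrow> w i = 0) \<Longrightarrow> mat_in m m (outer w)"
  by (auto simp: mat_in_def outer_def)

lemma hh_unitary:
  assumes w: "\<forall>i. m \<le> i \<longrightarrow> w i = 0" and nz: "nsq m w \<noteq> 0"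
  shows "unitary m (hh m w)"
proof -
  define c where "c = complex_of_real (2 / nsq m w)"
  have O: "mat_in m m (outer w)" using mat_in_outer[OF w] .
  have H: "mat_in m m (hh m w)" using O mat_in_mid[of m] unfolding hh_def mat_in_def by auto
  have adj: "madj (hh m w) = hh m w"
    unfolding hh_def madj_def outer_def mid_def by (auto intro!: ext)
  have hhe: "hh m w = (\<lambda>i j. mid m i j - c * outer w i j)" unfolding hh_def c_def ..
  have "mmul m (hh m w) (hh m w) = (\<lambda>i j. mmul m (mid m) (hh m w) i j - c * mmul m (outer w) (hh m w) i j)"
    by (subst (1) hhe) (simp add: mmul_diff_left mmul_scale_left)
  also have "mmul m (outer w) (hh m w) = (\<lambda>i j. mmul m (outer w) (mid m) i j - c * mmul m (outer w) (outer w) i j)"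
    by (subst hhe) (simp add: mmul_diff_right mmul_scale_right)
  also have "\<dots> = (\<lambda>i j. outer w i j - c * (complex_of_real (nsq m w) * outer w i j))"
    using mmul_mid_right[OF O] mmul_outer by simp
  also have "mmul m (mid m) (hh m w) = hh m w" using mmul_mid_left[OF H] .
  finally have "mmul m (hh m w) (hh m w) = (\<lambda>i j. mid m i j - c * outer w i j - c * (outer w i j - c * (complex_of_real (nsq m w) * outer w i j)))"
    unfolding hhe by simp
  also have "\<dots> = mid m"
  proof (rule ext, rule ext)
    fix i j
    have "c * c * complex_of_real (nsq m w) = 2 * c" unfolding c_def using nz
      by (simp add: field_simps of_real_divide)
    then show "mid m i j - c * outer w i j - c * (outer w i j - c * (complex_of_real (nsq m w) * outer w i j)) = mid m i j"
      by (simp add: algebra_simps) (metis mult.assoc mult.commute)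
  qed
  finally show ?thesis unfolding unitary_def using H adj by simp
qed

lemma house:
  assumes us: "\<forall>i. s \<le> i \<longrightarrow> u i = 0" and sm: "s \<le> m" and ns: "n < s"
    and un: "nsq m u = 1" and ua: "u n = complex_of_real a" and a0: "0 \<le> a"
  shows "\<exists>W. unitary m W \<and> (\<forall>i. W i n = u i) \<and> (\<forall>i j. (s \<le> i \<or> s \<le> j) \<longrightarrow> W i j = mid m i j)"
proof -
  have nm: "n < m" using ns sm by simp
  have cn: "cmod (u n) = a" using ua a0 by simp
  have "(cmod (u n))\<^sup>2 \<le> nsq m u" unfolding nsq_def using nm by (intro member_le_sum) auto
  then have "a\<^sup>2 \<le> 1" using cn un by simp
  then have a1: "a \<le> 1" using a0 by (simp add: power_le_one_iff abs_le_square_iff)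
  show ?thesis
  proof (cases "a = 1")
    case True
    have split: "nsq m u = (cmod (u n))\<^sup>2 + (\<Sum>k\<in>{..<m} - {n}. (cmod (u k))\<^sup>2)"
      unfolding nsq_def using nm by (simp add: sum.remove)
    then have "(\<Sum>k\<in>{..<m} - {n}. (cmod (u k))\<^sup>2) = 0" using un cn True by simp
    then have z: "\<forall>k\<in>{..<m} - {n}. (cmod (u k))\<^sup>2 = 0"
      by (subst sum_nonneg_eq_0_iff[symmetric]) auto
    have "\<forall>i. mid m i n = u i"
    proof
      fix i show "mid m i n = u i"
      proof (cases "i = n")
        case True then show ?thesis using nm ua \<open>a = 1\<close> by (simp add: mid_def)
      next
        case False
        then have "u i = 0" using z us sm by (cases "i < m") auto
        then show ?thesis using False by (simp add: mid_def)
      qed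
    qed
    then show ?thesis using unitary_mid by blast
  next
    case False
    then have a1': "a < 1" using a1 by simp
    define w where "w = (\<lambda>i. u i - (if i = n then 1 else 0))"
    have ws: "\<forall>i. s \<le> i \<longrightarrow> w i = 0" using us ns unfolding w_def by auto
    have wm: "\<forall>i. m \<le> i \<longrightarrow> w i = 0" using ws sm by auto
    have wn: "w n = complex_of_real (a - 1)" unfolding w_def using ua by simp
    have "nsq m w = (\<Sum>k<m. (cmod (u k))\<^sup>2 + (if k = n then (1 - a)\<^sup>2 - a\<^sup>2 else 0))"
      unfolding nsq_def
    proof (intro sum.cong refl)
      fix k assume "k \<in> {..<m}"
      show "(cmod (w k))\<^sup>2 = (cmod (u k))\<^sup>2 + (if k = n then (1 - a)\<^sup>2 - a\<^sup>2 else 0)"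
      proof (cases "k = n")
        case True
        have "cmod (w k) = \<bar>a - 1\<bar>" using wn True by (simp only: norm_of_real)
        then show ?thesis using True cn by (simp add: power2_eq_square abs_mult_self_eq algebra_simps)
      qed (simp add: w_def)
    qed
    also have "\<dots> = nsq m u + ((1 - a)\<^sup>2 - a\<^sup>2)"
      unfolding nsq_def sum.distrib using nm by simp
    finally have nw: "nsq m w = 2 - 2 * a" using un by (simp add: power2_eq_square algebra_simps)
    then have nz: "nsq m w \<noteq> 0" using a1' by simp
    have "\<forall>i. hh m w i n = u i"
    proof
      fix i
      have "(2 / nsq m w) * (a - 1) = -1"
        using nw a1' by (simp add: field_simps)
      then have c: "complex_of_real (2 / nsq m w) * cnj (w n) = -1"
        unfolding wn by (metis complex_cnj_complex_of_real of_real_minus of_real_mult of_real_1)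
      have "hh m w i n = mid m i n - complex_of_real (2 / nsq m w) * cnj (w n) * w i"
        unfolding hh_def outer_def by (simp add: mult_ac)
      also have "\<dots> = mid m i n + w i" using c by simp
      also have "\<dots> = u i" unfolding w_def mid_def using nm by auto
      finally show "hh m w i n = u i" .
    qed
    moreover have "\<forall>i j. (s \<le> i \<or> s \<le> j) \<longrightarrow> hh m w i j = mid m i j"
      using ws unfolding hh_def outer_def by auto
    ultimately show ?thesis using hh_unitary[OF wm nz] by blast
  qed
qed

lemma mmul_apply: "mmul p A B i j = (\<Sum>k<p. A i k * B k j)"
  by (simp add: mmul_def)

definition blk :: "nat \<Rightarrow> cmat \<Rightarrow> bool" where
  "blk s g \<longleftrightarrow> (\<forall>i j. (s \<le> i \<or> s \<le> j) \<and> i \<noteq> j \<longrightarrow> g i j = 0)"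

lemma blk_mmul: assumes "blk s A" "blk s B" shows "blk s (mmul m A B)"
  unfolding blk_def
proof (intro allI impI)
  fix i j assume ij: "(s \<le> i \<or> s \<le> j) \<and> i \<noteq> j"
  have "\<forall>k. A i k * B k j = 0"
  proof
    fix k show "A i k * B k j = 0"
      using assms ij unfolding blk_def by (cases "k = i"; cases "k = j") auto
  qed
  then show "mmul m A B i j = 0" unfolding mmul_def by (intro sum.neutral) blast
qed

lemma blk_madj: "blk s A \<Longrightarrow> blk s (madj A)"
  unfolding blk_def madj_def by auto

lemma nsq_scale: "nsq m (\<lambda>i. c * v i) = (cmod c)\<^sup>2 * nsq m v"
  unfolding nsq_def by (simp add: sum_distrib_left norm_mult power_mult_distrib)

lemma spectral_blk:
  "s \<le> m \<Longrightarrow> unitary m g \<Longrightarrow> blk s g \<Longrightarrow>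
   \<exists>U d. unitary m U \<and> (\<forall>i<m. cmod (d i) = 1) \<and> mmul m (mmul m (madj U) g) U = diagm m d"
proof (induction s arbitrary: g)
  case 0
  have g: "mat_in m m g" "mmul m g (madj g) = mid m" using 0 unfolding unitary_def by auto
  have off: "\<And>i j. i \<noteq> j \<Longrightarrow> g i j = 0" using 0 unfolding blk_def by auto
  have gd: "g = diagm m (\<lambda>i. g i i)"
    using off g(1) unfolding diagm_def mat_in_def by (auto intro!: ext)
  have "cmod (g i i) = 1" if i: "i < m" for i
  proof -
    have "mmul m g (madj g) i i = (\<Sum>k<m. if k = i then g i i * cnj (g i i) else 0)"
      unfolding mmul_def madj_def by (intro sum.cong refl) (auto simp: off)
    also have "\<dots> = g i i * cnj (g i i)" using i by simp
    finally have "g i i * cnj (g i i) = 1" using g(2) i by (simp add: mid_def)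
    then have "complex_of_real ((cmod (g i i))\<^sup>2) = 1" by (simp add: complex_mult_cnj cmod_power2)
    then have "(cmod (g i i))\<^sup>2 = 1" using of_real_eq_1_iff by blast
    then show ?thesis using norm_ge_zero[of "g i i"] by (auto simp: power2_eq_1_iff)
  qed
  moreover have "mmul m (mmul m (madj (mid m)) g) (mid m) = g"
    using mmul_mid_left[OF g(1)] mmul_mid_right[OF g(1)] by simp
  ultimately show ?case using unitary_mid gd by metis
next
  case (Suc s)
  note sm = Suc.prems(1) and gu = Suc.prems(2) and gb = Suc.prems(3)
  define n where "n = s"
  have nm: "n < m" using sm n_def by simp
  have g: "mat_in m m g" "mmul m g (madj g) = mid m" "mmul m (madj g) g = mid m"
    using gu unfolding unitary_def by auto
  obtain v lam where v0: "\<exists>i<Suc s. v i \<noteq> 0" and vs: "\<forall>i. Suc s \<le> i \<longrightarrow> v i = 0"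
    and ve: "\<forall>i<Suc s. (\<Sum>j<Suc s. g i j * v j) = lam * v i"
    using eigvec_exists[of "Suc s" g] by auto
  define nv where "nv = nsq m v"
  have nvpos: "nv > 0"
  proof -
    obtain i where i: "i < Suc s" "v i \<noteq> 0" using v0 by auto
    have "0 < (cmod (v i))\<^sup>2" using i by simp
    also have "\<dots> \<le> nv" unfolding nv_def nsq_def using i sm by (intro member_le_sum) auto
    finally show ?thesis .
  qed
  define ph where "ph = (if v n = 0 then 1 else cnj (v n) / complex_of_real (cmod (v n)))"
  have ph1: "cmod ph = 1" unfolding ph_def by (simp add: norm_divide)
  have phv: "ph * v n = complex_of_real (cmod (v n))"
  proof (cases "v n = 0")
    case False
    have "cnj (v n) * v n = complex_of_real ((cmod (v n))\<^sup>2)"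
      by (simp add: complex_mult_cnj cmod_power2 mult.commute)
    also have "\<dots> = complex_of_real (cmod (v n)) * complex_of_real (cmod (v n))"
      by (simp add: power2_eq_square)
    finally have "cnj (v n) * v n = complex_of_real (cmod (v n)) * complex_of_real (cmod (v n))" .
    then show ?thesis using False unfolding ph_def by simp
  qed (simp add: ph_def)
  define c where "c = complex_of_real (1 / sqrt nv) * ph"
  define u where "u = (\<lambda>i. c * v i)"
  have us: "\<forall>i. Suc s \<le> i \<longrightarrow> u i = 0" using vs unfolding u_def by simp
  have "cmod c = 1 / sqrt nv" unfolding c_def using ph1 nvpos by (simp add: norm_mult norm_divide)
  then have "(cmod c)\<^sup>2 = 1 / nv" using nvpos by (simp add: power_divide)
  then have un: "nsq m u = 1"
    unfolding u_def nsq_scale using nvpos unfolding nv_def by simp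
  have ua: "u n = complex_of_real (cmod (v n) / sqrt nv)"
    unfolding u_def c_def using phv by (simp add: mult.assoc)
  have ue: "\<forall>l. (\<Sum>k<m. g l k * u k) = lam * u l"
  proof
    fix l
    show "(\<Sum>k<m. g l k * u k) = lam * u l"
    proof (cases "l < Suc s")
      case True
      have "(\<Sum>k<m. g l k * u k) = (\<Sum>k<Suc s. g l k * u k)"
        using us sm by (intro sum.mono_neutral_right) auto
      also have "\<dots> = c * (\<Sum>k<Suc s. g l k * v k)"
        unfolding u_def sum_distrib_left by (simp add: mult_ac)
      also have "\<dots> = lam * u l" using ve True unfolding u_def by simp
      finally show ?thesis .
    next
      case False
      have "\<forall>k. g l k * u k = 0"
      proof
        fix k show "g l k * u k = 0"
          using False gb us unfolding blk_def by (cases "k = l") auto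
      qed
      then have "(\<Sum>k<m. g l k * u k) = 0" by (intro sum.neutral) blast
      then show ?thesis using False us by simp
    qed
  qed
  obtain W where Wu: "unitary m W" and Wn: "\<forall>i. W i n = u i"
    and Wb: "\<forall>i j. (Suc s \<le> i \<or> Suc s \<le> j) \<longrightarrow> W i j = mid m i j"
  proof -
    have a0: "0 \<le> cmod (v n) / sqrt nv" using nvpos by (intro divide_nonneg_nonneg) auto
    have ns: "n < Suc s" using n_def by simp
    show ?thesis using house[OF us sm ns un ua a0] that by blast
  qed
  have Wblk: "blk (Suc s) W" using Wb unfolding blk_def mid_def by auto
  have Wm: "mat_in m m W" "mmul m W (madj W) = mid m" "mmul m (madj W) W = mid m"
    using Wu unfolding unitary_def by auto
  define g1 where "g1 = mmul m (mmul m (madj W) g) W"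
  have g1u: "unitary m g1" unfolding g1_def by (intro unitary_mmul unitary_madj Wu gu)
  have g1b: "blk (Suc s) g1" unfolding g1_def by (intro blk_mmul blk_madj Wblk gb)
  have g1m: "mat_in m m g1" "mmul m g1 (madj g1) = mid m" "mmul m (madj g1) g1 = mid m"
    using g1u unfolding unitary_def by auto
  have gW: "mmul m g W l n = lam * W l n" for l
    using ue Wn unfolding mmul_def by simp
  have col: "g1 i n = lam * mid m i n" for i
  proof -
    have "g1 i n = mmul m (madj W) (mmul m g W) i n" unfolding g1_def by (simp add: mmul_assoc)
    also have "\<dots> = (\<Sum>k<m. madj W i k * mmul m g W k n)" by (rule mmul_apply)
    also have "\<dots> = (\<Sum>k<m. madj W i k * (lam * W k n))" using gW by simp
    also have "\<dots> = lam * mmul m (madj W) W i n" by (simp add: mmul_apply sum_distrib_left mult_ac)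
    finally show ?thesis using Wm(3) by simp
  qed
  have lam1: "(cmod lam)\<^sup>2 = 1"
  proof -
    have "mmul m (madj g1) g1 n n = (\<Sum>k<m. if k = n then cnj lam * lam else 0)"
      unfolding mmul_def madj_def using col by (intro sum.cong refl) (auto simp: mid_def)
    then have "cnj lam * lam = 1" using g1m(3) nm by (simp add: mid_def)
    then have "complex_of_real ((cmod lam)\<^sup>2) = 1" by (simp add: complex_mult_cnj cmod_power2 mult.commute)
    then show ?thesis using of_real_eq_1_iff by blast
  qed
  have row: "g1 n k = 0" if "k \<noteq> n" for k
  proof (cases "k < m")
    case True
    have "complex_of_real (\<Sum>k<m. (cmod (g1 n k))\<^sup>2) = mmul m g1 (madj g1) n n"
      unfolding mmul_def madj_def of_real_sum
      by (intro sum.cong refl) (simp add: complex_mult_cnj cmod_power2)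
    also have "\<dots> = 1" using g1m(2) nm by (simp add: mid_def)
    finally have S: "(\<Sum>k<m. (cmod (g1 n k))\<^sup>2) = 1" using of_real_eq_1_iff by blast
    have "g1 n n = lam" using col nm by (simp add: mid_def)
    then have "(\<Sum>k<m. (cmod (g1 n k))\<^sup>2) = 1 + (\<Sum>k\<in>{..<m} - {n}. (cmod (g1 n k))\<^sup>2)"
      using lam1 nm by (simp add: sum.remove)
    then have "(\<Sum>k\<in>{..<m} - {n}. (cmod (g1 n k))\<^sup>2) = 0" using S by simp
    then have "\<forall>k\<in>{..<m} - {n}. (cmod (g1 n k))\<^sup>2 = 0"
      by (subst sum_nonneg_eq_0_iff[symmetric]) auto
    then show ?thesis using True that by auto
  next
    case False then show ?thesis using g1m(1) unfolding mat_in_def by auto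
  qed
  have g1b': "blk s g1"
    unfolding blk_def
  proof (intro allI impI)
    fix i j assume ij: "(s \<le> i \<or> s \<le> j) \<and> i \<noteq> j"
    show "g1 i j = 0"
    proof (cases "Suc s \<le> i \<or> Suc s \<le> j")
      case True then show ?thesis using g1b ij unfolding blk_def by auto
    next
      case False
      then have "i = n \<or> j = n" using ij n_def by auto
      then show ?thesis
      proof
        assume "i = n" then show ?thesis using row ij by auto
      next
        assume "j = n" then show ?thesis using col ij by (simp add: mid_def)
      qed
    qed
  qed
  obtain U1 d where U1: "unitary m U1" and d: "\<forall>i<m. cmod (d i) = 1"
    and U1d: "mmul m (mmul m (madj U1) g1) U1 = diagm m d"
    using Suc.IH[OF _ g1u g1b'] sm by auto
  have "mmul m (mmul m (madj (mmul m W U1)) g) (mmul m W U1) = mmul m (mmul m (madj U1) g1) U1"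
    unfolding g1_def by (simp add: mmul_assoc madj_mmul)
  then show ?case using U1d unitary_mmul[OF Wu U1] d by metis
qed

lemma spectral:
  assumes "unitary m g"
  shows "\<exists>U d. unitary m U \<and> (\<forall>i<m. cmod (d i) = 1) \<and> mmul m (mmul m (madj U) g) U = diagm m d"
proof -
  have "blk m g" using assms unfolding unitary_def mat_in_def blk_def by auto
  then show ?thesis using spectral_blk[OF le_refl assms] by blast
qed

lemma omega_exists: "\<exists>\<omega>::complex. cmod \<omega> = 1 \<and> (\<forall>n. n > 0 \<longrightarrow> \<omega> ^ n \<noteq> 1)"
proof -
  obtain \<theta> :: real where th: "\<theta> \<notin> \<rat>"
    using uncountable_UNIV_real countable_rat by (metis countable_subset subsetI)
  define \<omega> where "\<omega> = exp (complex_of_real (2 * pi * \<theta>) * \<i>)"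
  have "cmod \<omega> = 1" unfolding \<omega>_def by simp
  moreover have "\<omega> ^ n \<noteq> 1" if n: "n > 0" for n
  proof
    assume "\<omega> ^ n = 1"
    then have "exp (of_nat n * (complex_of_real (2 * pi * \<theta>) * \<i>)) = 1"
      unfolding \<omega>_def by (simp add: exp_of_nat_mult)
    then obtain k :: int where k: "Im (of_nat n * (complex_of_real (2 * pi * \<theta>) * \<i>)) = of_int (2 * k) * pi"
      unfolding exp_eq_1 by blast
    then have "real n * (2 * pi * \<theta>) = 2 * real_of_int k * pi" by simp
    then have "\<theta> = real_of_int k / real n" using n by (simp add: field_simps)
    then have "\<theta> \<in> \<rat>" by simp
    then show False using th by simp
  qed
  ultimately show ?thesis by blast
qed

lemma diag_reduce:
  assumes x: "x \<in> level_set N K M1 M2 \<xi>" and g: "unitary M1 g" and h: "unitary M2 h"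
    and gh: "gauge_act N K M1 M2 g h x = torus_act r1 r2 s1 s2 t x"
    and U: "unitary M1 U" and Ud: "mmul M1 (mmul M1 (madj U) g) U = D"
    and V: "unitary M2 V" and Ve: "mmul M2 (mmul M2 (madj V) h) V = E"
  shows "gauge_act N K M1 M2 D E (gauge_act N K M1 M2 (madj U) (madj V) x) =
         torus_act r1 r2 s1 s2 t (gauge_act N K M1 M2 (madj U) (madj V) x)"
proof -
  have gm: "mat_in M1 M1 g" using g unfolding unitary_def by auto
  have hm: "mat_in M2 M2 h" using h unfolding unitary_def by auto
  have UU: "mmul M1 U (madj U) = mid M1" using U unfolding unitary_def by auto
  have VV: "mmul M2 V (madj V) = mid M2" using V unfolding unitary_def by auto
  have "mmul M1 D (madj U) = mmul M1 (madj U) (mmul M1 g (mmul M1 U (madj U)))"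
    unfolding Ud[symmetric] by (simp add: mmul_assoc)
  also have "\<dots> = mmul M1 (madj U) g" using UU mmul_mid_right[OF gm] by simp
  finally have D1: "mmul M1 D (madj U) = mmul M1 (madj U) g" .
  have "mmul M2 E (madj V) = mmul M2 (madj V) (mmul M2 h (mmul M2 V (madj V)))"
    unfolding Ve[symmetric] by (simp add: mmul_assoc)
  also have "\<dots> = mmul M2 (madj V) h" using VV mmul_mid_right[OF hm] by simp
  finally have E1: "mmul M2 E (madj V) = mmul M2 (madj V) h" .
  have "gauge_act N K M1 M2 D E (gauge_act N K M1 M2 (madj U) (madj V) x) =
        gauge_act N K M1 M2 (madj U) (madj V) (gauge_act N K M1 M2 g h x)"
    by (simp add: gauge_act_comp D1 E1)
  also have "\<dots> = torus_act r1 r2 s1 s2 t (gauge_act N K M1 M2 (madj U) (madj V) x)"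
    by (simp add: gh torus_gauge_comm)
  finally show ?thesis .
qed

lemma mmul_adj_diag: "mmul p A (madj A) i i = complex_of_real (\<Sum>k<p. (cmod (A i k))\<^sup>2)"
  unfolding mmul_def madj_def of_real_sum
  by (intro sum.cong refl) (simp add: complex_mult_cnj cmod_power2)

lemma mmul_adj_diag': "mmul p (madj A) A i i = complex_of_real (\<Sum>k<p. (cmod (A k i))\<^sup>2)"
  unfolding mmul_def madj_def of_real_sum
  by (intro sum.cong refl) (simp add: complex_mult_cnj cmod_power2 mult.commute)

lemma phase_rel:
  assumes b: "cmod b = 1" and e: "a * z * cnj b = \<omega> * z" and z: "z \<noteq> 0"
  shows "a = \<omega> * b"
proof -
  have "a * cnj b = \<omega>" using e z by (metis mult.commute mult.left_commute mult_cancel_left)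
  then have "a * (cnj b * b) = \<omega> * b" by (simp add: mult.assoc)
  moreover have "cnj b * b = complex_of_real ((cmod b)\<^sup>2)" by (simp add: complex_mult_cnj cmod_power2 mult.commute)
  then have "cnj b * b = 1" using b by simp
  ultimately show ?thesis by simp
qed

lemma sum_V:
  fixes f :: "nat + nat \<Rightarrow> real"
  shows "(\<Sum>q\<in>Inl ` {..<M1} \<union> Inr ` {..<M2}. f q) = (\<Sum>j<M1. f (Inl j)) + (\<Sum>k<M2. f (Inr k))"
  by (subst sum.union_disjoint) (auto simp: sum.reindex)

lemma card_V: "card (Inl ` {..<M1} \<union> Inr ` {..<(M2::nat)} :: (nat + nat) set) = M1 + M2"
  by (subst card_Un_disjoint) (auto simp: card_image)

lemma S_entry:
  assumes "mmul m (mmul n (diagm n e) A) (madj (diagm m d)) = msc c A" "k < n" "i < m"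
  shows "e k * A k i * cnj (d i) = c * A k i"
proof -
  have "mmul m (mmul n (diagm n e) A) (madj (diagm m d)) k i = msc c A k i" using assms(1) by simp
  then show ?thesis using assms(2,3) by (simp add: mmul_diagm_left mmul_diagm_right msc_def)
qed

lemma left_entry:
  assumes "mmul m (diagm m d) A = A" "i < m"
  shows "d i * A i j = A i j"
proof -
  have "mmul m (diagm m d) A i j = A i j" using assms(1) by simp
  then show ?thesis using assms(2) by (simp add: mmul_diagm_left)
qed

lemma right_entry:
  assumes "mmul m A (madj (diagm m d)) = msc c A" "j < m"
  shows "A i j * cnj (d j) = c * A i j"
proof -
  have "mmul m A (madj (diagm m d)) i j = msc c A i j" using assms(1) by simp
  then show ?thesis using assms(2) by (simp add: mmul_diagm_right msc_def)
qed

lemma sq_bound: assumes "0 \<le> (t::real)" "t\<^sup>2 \<le> c" shows "t \<le> c + 1"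
proof (cases "t \<le> 1")
  case True
  have "0 \<le> t\<^sup>2" by simp
  then show ?thesis using True assms by linarith
next
  case False
  then have "t \<le> t * t" by (simp add: mult_le_cancel_left1)
  then show ?thesis using assms by (simp add: power2_eq_square)
qed

lemma sum_ne0: "(\<Sum>a<n. (cmod (f a))\<^sup>2) \<noteq> 0 \<Longrightarrow> \<exists>a<n. f a \<noteq> 0"
  by (metis (mono_tags, lifting) lessThan_iff norm_zero power_zero_numeral sum.neutral)

lemma coord_bound:
  fixes X Y I J X' Y' I' J' S :: cmat and \<omega> :: complex
  assumes L: "(X, Y, I, J, X', Y', I', J', S) \<in> level_set N K M1 M2 \<xi>"
    and xi: "\<xi> \<noteq> 0"
    and gd: "gauge_act N K M1 M2 (diagm M1 d) (diagm M2 e) (X, Y, I, J, X', Y', I', J', S) =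
             torus_act \<omega> \<omega> \<omega> \<omega> \<omega> (X, Y, I, J, X', Y', I', J', S)"
    and d1: "\<forall>i<M1. cmod (d i) = 1" and e1: "\<forall>k<M2. cmod (e k) = 1"
    and om1: "cmod \<omega> = 1" and om: "\<forall>n. n > 0 \<longrightarrow> \<omega> ^ n \<noteq> 1"
  shows "\<forall>i j. cmod (X i j) \<le> \<bar>\<xi>\<bar> * (M1 + M2) + 1 \<and> cmod (Y i j) \<le> \<bar>\<xi>\<bar> * (M1 + M2) + 1 \<and>
     cmod (I i j) \<le> \<bar>\<xi>\<bar> * (M1 + M2) + 1 \<and> cmod (J i j) \<le> \<bar>\<xi>\<bar> * (M1 + M2) + 1 \<and>
     cmod (X' i j) \<le> \<bar>\<xi>\<bar> * (M1 + M2) + 1 \<and> cmod (Y' i j) \<le> \<bar>\<xi>\<bar> * (M1 + M2) + 1 \<and>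
     cmod (I' i j) \<le> \<bar>\<xi>\<bar> * (M1 + M2) + 1 \<and> cmod (J' i j) \<le> \<bar>\<xi>\<bar> * (M1 + M2) + 1 \<and>
     cmod (S i j) \<le> \<bar>\<xi>\<bar> * (M1 + M2) + 1"
proof -
  define B1 where "B1 = \<bar>\<xi>\<bar> * (M1 + M2) + 1"
  note Ld = level_setD[OF L]
  have gX: "mmul M1 (mmul M1 (diagm M1 d) X) (madj (diagm M1 d)) = msc \<omega> X"
   and gY: "mmul M1 (mmul M1 (diagm M1 d) Y) (madj (diagm M1 d)) = msc \<omega> Y"
   and gI: "mmul M1 (diagm M1 d) I = I"
   and gJ: "mmul M1 J (madj (diagm M1 d)) = msc (\<omega> * \<omega>) J"
   and gX': "mmul M2 (mmul M2 (diagm M2 e) X') (madj (diagm M2 e)) = msc \<omega> X'"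
   and gY': "mmul M2 (mmul M2 (diagm M2 e) Y') (madj (diagm M2 e)) = msc \<omega> Y'"
   and gI': "mmul M2 (diagm M2 e) I' = I'"
   and gJ': "mmul M2 J' (madj (diagm M2 e)) = msc (\<omega> * \<omega>) J'"
   and gS: "mmul M1 (mmul M2 (diagm M2 e) S) (madj (diagm M1 d)) = msc \<omega> S"
    using gd unfolding gauge_act_def torus_act_def by simp_all
  define \<beta> where "\<beta> = cnj \<omega> * cnj \<omega>"
  have om0: "\<omega> \<noteq> 0" using om1 by auto
  have oc: "cnj \<omega> * \<omega> = 1"
  proof -
    have "cnj \<omega> * \<omega> = complex_of_real ((cmod \<omega>)\<^sup>2)" by (simp add: complex_mult_cnj cmod_power2 mult.commute)
    then show ?thesis using om1 by simp
  qed
  have be: "\<beta> \<noteq> \<omega> ^ n" for n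
  proof
    assume "\<beta> = \<omega> ^ n"
    then have "\<beta> * (\<omega> * \<omega>) = \<omega> ^ n * (\<omega> * \<omega>)" by simp
    moreover have "\<beta> * (\<omega> * \<omega>) = 1" unfolding \<beta>_def using oc by (metis mult.assoc mult.left_commute mult_1)
    ultimately have "\<omega> ^ n * (\<omega> * \<omega>) = 1" by simp
    then have "\<omega> ^ (n + 2) = 1" by (simp add: power_add power2_eq_square mult_ac)
    moreover have "\<omega> ^ (n + 2) \<noteq> 1" using om[rule_format, of "n + 2"] by simp
    ultimately show False by contradiction
  qed
  have be0: "\<beta> \<noteq> 0" unfolding \<beta>_def using om0 by simp
  have cX: "d i = \<omega> * d j" if "i < M1" "j < M1" "X i j \<noteq> 0" for i j
    using phase_rel[OF _ S_entry[OF gX that(1,2)] that(3)] d1 that by auto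
  have cY: "d i = \<omega> * d j" if "i < M1" "j < M1" "Y i j \<noteq> 0" for i j
    using phase_rel[OF _ S_entry[OF gY that(1,2)] that(3)] d1 that by auto
  have cX': "e i = \<omega> * e j" if "i < M2" "j < M2" "X' i j \<noteq> 0" for i j
    using phase_rel[OF _ S_entry[OF gX' that(1,2)] that(3)] e1 that by auto
  have cY': "e i = \<omega> * e j" if "i < M2" "j < M2" "Y' i j \<noteq> 0" for i j
    using phase_rel[OF _ S_entry[OF gY' that(1,2)] that(3)] e1 that by auto
  have cS: "e k = \<omega> * d i" if "k < M2" "i < M1" "S k i \<noteq> 0" for k i
    using phase_rel[OF _ S_entry[OF gS that(1,2)] that(3)] d1 that by auto
  have cI: "d i = 1" if "i < M1" "I i a \<noteq> 0" for i a
    using left_entry[OF gI that(1), of a] that(2) by simp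
  have cI': "e i = 1" if "i < M2" "I' i a \<noteq> 0" for i a
    using left_entry[OF gI' that(1), of a] that(2) by simp
  have cJ: "d i = \<beta>" if "i < M1" "J a i \<noteq> 0" for i a
  proof -
    have "J a i * cnj (d i) = \<omega> * \<omega> * J a i" using right_entry[OF gJ that(1)] .
    then have "cnj (d i) = \<omega> * \<omega>" using that(2) by (metis mult.commute mult_cancel_left)
    then show ?thesis unfolding \<beta>_def by (metis complex_cnj_cnj complex_cnj_mult)
  qed
  have cJ': "e i = \<beta>" if "i < M2" "J' a i \<noteq> 0" for i a
  proof -
    have "J' a i * cnj (e i) = \<omega> * \<omega> * J' a i" using right_entry[OF gJ' that(1)] .
    then have "cnj (e i) = \<omega> * \<omega>" using that(2) by (metis mult.commute mult_cancel_left)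
    then show ?thesis unfolding \<beta>_def by (metis complex_cnj_cnj complex_cnj_mult)
  qed
  have m1: "(\<Sum>j<M1. (cmod (X i j))\<^sup>2) - (\<Sum>j<M1. (cmod (X j i))\<^sup>2)
      + ((\<Sum>j<M1. (cmod (Y i j))\<^sup>2) - (\<Sum>j<M1. (cmod (Y j i))\<^sup>2))
      + (\<Sum>a<N. (cmod (I i a))\<^sup>2) - (\<Sum>a<N. (cmod (J a i))\<^sup>2) - (\<Sum>k<M2. (cmod (S k i))\<^sup>2) = \<xi>"
    if i: "i < M1" for i
  proof -
    have "Re ((mmul M1 X (madj X) i i - mmul M1 (madj X) X i i)
       + (mmul M1 Y (madj Y) i i - mmul M1 (madj Y) Y i i)
       + mmul N I (madj I) i i - mmul N (madj J) J i i - mmul M2 (madj S) S i i)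
       = Re (complex_of_real \<xi> * mid M1 i i)"
      using fun_cong[OF fun_cong[OF Ld(12)], of i i] by simp
    then show ?thesis using i by (simp add: mmul_adj_diag mmul_adj_diag' mid_def)
  qed
  have m2: "(\<Sum>j<M2. (cmod (X' i j))\<^sup>2) - (\<Sum>j<M2. (cmod (X' j i))\<^sup>2)
      + ((\<Sum>j<M2. (cmod (Y' i j))\<^sup>2) - (\<Sum>j<M2. (cmod (Y' j i))\<^sup>2))
      + (\<Sum>a<K. (cmod (I' i a))\<^sup>2) - (\<Sum>a<K. (cmod (J' a i))\<^sup>2) + (\<Sum>k<M1. (cmod (S i k))\<^sup>2) = \<xi>"
    if i: "i < M2" for i
  proof -
    have "Re ((mmul M2 X' (madj X') i i - mmul M2 (madj X') X' i i)
       + (mmul M2 Y' (madj Y') i i - mmul M2 (madj Y') Y' i i)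
       + mmul K I' (madj I') i i - mmul K (madj J') J' i i + mmul M1 S (madj S) i i)
       = Re (complex_of_real \<xi> * mid M2 i i)"
      using fun_cong[OF fun_cong[OF Ld(13)], of i i] by simp
    then show ?thesis using i by (simp add: mmul_adj_diag mmul_adj_diag' mid_def)
  qed
  define V :: "(nat + nat) set" where "V = Inl ` {..<M1} \<union> Inr ` {..<M2}"
  define w :: "nat + nat \<Rightarrow> nat + nat \<Rightarrow> real" where
    "w = (\<lambda>p q. case p of
        Inl i \<Rightarrow> (case q of Inl j \<Rightarrow> (cmod (X i j))\<^sup>2 + (cmod (Y i j))\<^sup>2 | Inr k \<Rightarrow> 0)
      | Inr k \<Rightarrow> (case q of Inl i \<Rightarrow> (cmod (S k i))\<^sup>2 | Inr l \<Rightarrow> (cmod (X' k l))\<^sup>2 + (cmod (Y' k l))\<^sup>2))"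
  define inn :: "nat + nat \<Rightarrow> real" where
    "inn = (\<lambda>p. case p of Inl i \<Rightarrow> (\<Sum>a<N. (cmod (I i a))\<^sup>2) | Inr k \<Rightarrow> (\<Sum>a<K. (cmod (I' k a))\<^sup>2))"
  define out :: "nat + nat \<Rightarrow> real" where
    "out = (\<lambda>p. case p of Inl i \<Rightarrow> (\<Sum>a<N. (cmod (J a i))\<^sup>2) | Inr k \<Rightarrow> (\<Sum>a<K. (cmod (J' a k))\<^sup>2))"
  define \<delta> :: "nat + nat \<Rightarrow> complex" where
    "\<delta> = (\<lambda>p. case p of Inl i \<Rightarrow> d i | Inr k \<Rightarrow> e k)"
  have finV: "finite V" unfolding V_def by simp
  have cardV: "card V = M1 + M2" unfolding V_def by (rule card_V)
  have wnn: "\<And>p q. w p q \<ge> 0" unfolding w_def by (auto split: sum.splits)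
  have inn_nn: "\<And>p. inn p \<ge> 0" unfolding inn_def by (auto split: sum.splits intro: sum_nonneg)
  have out_nn: "\<And>p. out p \<ge> 0" unfolding out_def by (auto split: sum.splits intro: sum_nonneg)
  have eq: "\<forall>p\<in>V. (\<Sum>q\<in>V. w p q) - (\<Sum>q\<in>V. w q p) + inn p - out p = \<xi>"
  proof
    fix p assume "p \<in> V"
    then consider (l) i where "i < M1" "p = Inl i" | (r) k where "k < M2" "p = Inr k"
      unfolding V_def by auto
    then show "(\<Sum>q\<in>V. w p q) - (\<Sum>q\<in>V. w q p) + inn p - out p = \<xi>"
    proof cases
      case l
      have "(\<Sum>q\<in>V. w p q) = (\<Sum>j<M1. (cmod (X i j))\<^sup>2) + (\<Sum>j<M1. (cmod (Y i j))\<^sup>2)"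
        unfolding V_def sum_V using l by (simp add: w_def sum.distrib)
      moreover have "(\<Sum>q\<in>V. w q p) = (\<Sum>j<M1. (cmod (X j i))\<^sup>2) + (\<Sum>j<M1. (cmod (Y j i))\<^sup>2) + (\<Sum>k<M2. (cmod (S k i))\<^sup>2)"
        unfolding V_def sum_V using l by (simp add: w_def sum.distrib)
      ultimately show ?thesis using m1[OF l(1)] l by (simp add: inn_def out_def)
    next
      case r
      have "(\<Sum>q\<in>V. w p q) = (\<Sum>j<M1. (cmod (S k j))\<^sup>2) + ((\<Sum>j<M2. (cmod (X' k j))\<^sup>2) + (\<Sum>j<M2. (cmod (Y' k j))\<^sup>2))"
        unfolding V_def sum_V using r by (simp add: w_def sum.distrib)
      moreover have "(\<Sum>q\<in>V. w q p) = (\<Sum>j<M2. (cmod (X' j k))\<^sup>2) + (\<Sum>j<M2. (cmod (Y' j k))\<^sup>2)"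
        unfolding V_def sum_V using r by (simp add: w_def sum.distrib)
      ultimately show ?thesis using m2[OF r(1)] r by (simp add: inn_def out_def)
    qed
  qed
  have cw: "\<delta> p = \<omega> * \<delta> q" if pV: "p \<in> V" and qV: "q \<in> V" and nz: "w p q \<noteq> 0" for p q
  proof -
    from pV qV consider (ll) i j where "i < M1" "j < M1" "p = Inl i" "q = Inl j"
      | (lr) i k where "i < M1" "k < M2" "p = Inl i" "q = Inr k"
      | (rl) k i where "k < M2" "i < M1" "p = Inr k" "q = Inl i"
      | (rr) k l where "k < M2" "l < M2" "p = Inr k" "q = Inr l"
      unfolding V_def by auto
    then show ?thesis
    proof cases
      case ll
      then have "X i j \<noteq> 0 \<or> Y i j \<noteq> 0" using nz unfolding w_def by auto
      then show ?thesis using cX[OF ll(1,2)] cY[OF ll(1,2)] ll unfolding \<delta>_def by auto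
    next
      case lr
      then show ?thesis using nz unfolding w_def by auto
    next
      case rl
      then have "S k i \<noteq> 0" using nz unfolding w_def by auto
      then show ?thesis using cS[OF rl(1,2)] rl unfolding \<delta>_def by auto
    next
      case rr
      then have "X' k l \<noteq> 0 \<or> Y' k l \<noteq> 0" using nz unfolding w_def by auto
      then show ?thesis using cX'[OF rr(1,2)] cY'[OF rr(1,2)] rr unfolding \<delta>_def by auto
    qed
  qed
  have ci: "\<delta> p = 1" if pV: "p \<in> V" and nz: "inn p \<noteq> 0" for p
  proof -
    from pV consider (l) i where "i < M1" "p = Inl i" | (r) k where "k < M2" "p = Inr k"
      unfolding V_def by auto
    then show ?thesis
    proof cases
      case l
      then obtain a where "a < N" "I i a \<noteq> 0" using nz sum_ne0[where n=N and f="\<lambda>a. I i a"] unfolding inn_def by auto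
      then show ?thesis using cI[OF l(1)] l unfolding \<delta>_def by auto
    next
      case r
      then obtain a where "a < K" "I' k a \<noteq> 0" using nz sum_ne0[where n=K and f="\<lambda>a. I' k a"] unfolding inn_def by auto
      then show ?thesis using cI'[OF r(1)] r unfolding \<delta>_def by auto
    qed
  qed
  have co: "\<delta> p = \<beta>" if pV: "p \<in> V" and nz: "out p \<noteq> 0" for p
  proof -
    from pV consider (l) i where "i < M1" "p = Inl i" | (r) k where "k < M2" "p = Inr k"
      unfolding V_def by auto
    then show ?thesis
    proof cases
      case l
      then obtain a where "a < N" "J a i \<noteq> 0" using nz sum_ne0[where n=N and f="\<lambda>a. J a i"] unfolding out_def by auto
      then show ?thesis using cJ[OF l(1)] l unfolding \<delta>_def by auto
    next
      case r
      then obtain a where "a < K" "J' a k \<noteq> 0" using nz sum_ne0[where n=K and f="\<lambda>a. J' a k"] unfolding out_def by auto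
      then show ?thesis using cJ'[OF r(1)] r unfolding \<delta>_def by auto
    qed
  qed
  have d0: "\<delta> p \<noteq> 0" if "p \<in> V" for p
    using that d1 e1 unfolding V_def \<delta>_def by auto
  have omn: "\<And>n. n > 0 \<Longrightarrow> \<omega> ^ n \<noteq> 1" using om by auto
  note fb = flow_bound[where w=w and inn=inn and out=out and \<delta>=\<delta> and \<omega>=\<omega> and \<beta>=\<beta> and \<xi>=\<xi> and V=V,
     OF finV wnn inn_nn out_nn eq xi cw ci co omn om0 be be0 d0]
  have B: "\<bar>\<xi>\<bar> * card V = \<bar>\<xi>\<bar> * (M1 + M2)" using cardV by simp
  have wb: "w p q \<le> \<bar>\<xi>\<bar> * (M1 + M2)" if "p \<in> V" "q \<in> V" for p q using fb(1) that B by auto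
  have ib: "inn p \<le> \<bar>\<xi>\<bar> * (M1 + M2)" if "p \<in> V" for p using fb(2) that B by auto
  have ob: "out p \<le> \<bar>\<xi>\<bar> * (M1 + M2)" if "p \<in> V" for p using fb(3) that B by auto
  have B1nn: "0 \<le> B1" unfolding B1_def by simp
  show ?thesis unfolding B1_def[symmetric]
  proof (intro allI conjI)
    fix i j
    show "cmod (X i j) \<le> B1"
    proof (cases "i < M1 \<and> j < M1")
      case True
      then have "(cmod (X i j))\<^sup>2 \<le> w (Inl i) (Inl j)" unfolding w_def by simp
      also have "\<dots> \<le> \<bar>\<xi>\<bar> * (M1 + M2)" using wb True unfolding V_def by auto
      finally show ?thesis unfolding B1_def by (intro sq_bound) auto
    next
      case False then show ?thesis using Ld(1) B1nn unfolding mat_in_def by auto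
    qed
    show "cmod (Y i j) \<le> B1"
    proof (cases "i < M1 \<and> j < M1")
      case True
      then have "(cmod (Y i j))\<^sup>2 \<le> w (Inl i) (Inl j)" unfolding w_def by simp
      also have "\<dots> \<le> \<bar>\<xi>\<bar> * (M1 + M2)" using wb True unfolding V_def by auto
      finally show ?thesis unfolding B1_def by (intro sq_bound) auto
    next
      case False then show ?thesis using Ld(2) B1nn unfolding mat_in_def by auto
    qed
    show "cmod (X' i j) \<le> B1"
    proof (cases "i < M2 \<and> j < M2")
      case True
      then have "(cmod (X' i j))\<^sup>2 \<le> w (Inr i) (Inr j)" unfolding w_def by simp
      also have "\<dots> \<le> \<bar>\<xi>\<bar> * (M1 + M2)" using wb True unfolding V_def by auto
      finally show ?thesis unfolding B1_def by (intro sq_bound) auto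
    next
      case False then show ?thesis using Ld(5) B1nn unfolding mat_in_def by auto
    qed
    show "cmod (Y' i j) \<le> B1"
    proof (cases "i < M2 \<and> j < M2")
      case True
      then have "(cmod (Y' i j))\<^sup>2 \<le> w (Inr i) (Inr j)" unfolding w_def by simp
      also have "\<dots> \<le> \<bar>\<xi>\<bar> * (M1 + M2)" using wb True unfolding V_def by auto
      finally show ?thesis unfolding B1_def by (intro sq_bound) auto
    next
      case False then show ?thesis using Ld(6) B1nn unfolding mat_in_def by auto
    qed
    show "cmod (S i j) \<le> B1"
    proof (cases "i < M2 \<and> j < M1")
      case True
      then have "(cmod (S i j))\<^sup>2 \<le> w (Inr i) (Inl j)" unfolding w_def by simp
      also have "\<dots> \<le> \<bar>\<xi>\<bar> * (M1 + M2)" using wb True unfolding V_def by auto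
      finally show ?thesis unfolding B1_def by (intro sq_bound) auto
    next
      case False then show ?thesis using Ld(9) B1nn unfolding mat_in_def by auto
    qed
    show "cmod (I i j) \<le> B1"
    proof (cases "i < M1 \<and> j < N")
      case True
      then have "(cmod (I i j))\<^sup>2 \<le> inn (Inl i)" unfolding inn_def
        by (simp, intro member_le_sum) auto
      also have "\<dots> \<le> \<bar>\<xi>\<bar> * (M1 + M2)" using ib True unfolding V_def by auto
      finally show ?thesis unfolding B1_def by (intro sq_bound) auto
    next
      case False then show ?thesis using Ld(3) B1nn unfolding mat_in_def by auto
    qed
    show "cmod (I' i j) \<le> B1"
    proof (cases "i < M2 \<and> j < K")
      case True
      then have "(cmod (I' i j))\<^sup>2 \<le> inn (Inr i)" unfolding inn_def
        by (simp, intro member_le_sum) auto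
      also have "\<dots> \<le> \<bar>\<xi>\<bar> * (M1 + M2)" using ib True unfolding V_def by auto
      finally show ?thesis unfolding B1_def by (intro sq_bound) auto
    next
      case False then show ?thesis using Ld(7) B1nn unfolding mat_in_def by auto
    qed
    show "cmod (J i j) \<le> B1"
    proof (cases "i < N \<and> j < M1")
      case True
      then have "(cmod (J i j))\<^sup>2 \<le> out (Inl j)" unfolding out_def
        by (simp, intro member_le_sum) auto
      also have "\<dots> \<le> \<bar>\<xi>\<bar> * (M1 + M2)" using ob True unfolding V_def by auto
      finally show ?thesis unfolding B1_def by (intro sq_bound) auto
    next
      case False then show ?thesis using Ld(4) B1nn unfolding mat_in_def by auto
    qed
    show "cmod (J' i j) \<le> B1"
    proof (cases "i < K \<and> j < M2")
      case True
      then have "(cmod (J' i j))\<^sup>2 \<le> out (Inr j)" unfolding out_def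
        by (simp, intro member_le_sum) auto
      also have "\<dots> \<le> \<bar>\<xi>\<bar> * (M1 + M2)" using ob True unfolding V_def by auto
      finally show ?thesis unfolding B1_def by (intro sq_bound) auto
    next
      case False then show ?thesis using Ld(8) B1nn unfolding mat_in_def by auto
    qed
  qed
qed

lemma bound_mmul:
  assumes A: "\<forall>i j. cmod (A i j) \<le> a" and B: "\<forall>i j. cmod (B i j) \<le> b"
  shows "cmod (mmul p A B i j) \<le> real p * (a * b)"
proof -
  have a0: "0 \<le> a" using A norm_ge_zero order_trans by blast
  have "cmod (mmul p A B i j) \<le> (\<Sum>k<p. cmod (A i k * B k j))"
    unfolding mmul_def by (rule norm_sum)
  also have "\<dots> \<le> (\<Sum>k<p. a * b)"
    by (intro sum_mono) (simp add: norm_mult mult_mono A B a0)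
  finally show ?thesis by simp
qed

lemma bound_madj: "\<forall>i j. cmod (A i j) \<le> a \<Longrightarrow> \<forall>i j. cmod (madj A i j) \<le> a"
  by (simp add: madj_def)

lemma bnd2: "0 \<le> (a::real) \<Longrightarrow> a \<le> m \<Longrightarrow> 0 \<le> b \<Longrightarrow> b \<le> m \<Longrightarrow> 0 \<le> B \<Longrightarrow> a * (b * B) \<le> m * m * B"
  by (metis mult.assoc mult_mono mult_nonneg_nonneg mult_right_mono order_trans)

lemma bnd1: "0 \<le> (a::real) \<Longrightarrow> a \<le> m \<Longrightarrow> 1 \<le> m \<Longrightarrow> 0 \<le> B \<Longrightarrow> a * B \<le> m * m * B"
proof -
  assume h: "0 \<le> a" "a \<le> m" "1 \<le> m" "0 \<le> B"
  have "a * (1 * B) \<le> m * m * B" using bnd2[of a m 1 B] h by simp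
  then show ?thesis by simp
qed

lemma fixset_bounded:
  assumes xi: "\<xi> \<noteq> 0"
  shows "fixset N K M1 M2 \<xi> \<subseteq> BoxQ (real (M1 + M2 + 1) * real (M1 + M2 + 1) * (\<bar>\<xi>\<bar> * (M1 + M2) + 1))"
proof
  fix x assume xf: "x \<in> fixset N K M1 M2 \<xi>"
  define B1 where "B1 = \<bar>\<xi>\<bar> * (M1 + M2) + 1"
  define m where "m = real (M1 + M2 + 1)"
  have B1nn: "0 \<le> B1" unfolding B1_def by simp
  have m1: "1 \<le> m" "real M1 \<le> m" "real M2 \<le> m" unfolding m_def by auto
  obtain \<omega> :: complex where om1: "cmod \<omega> = 1" and om: "\<forall>n. n > 0 \<longrightarrow> \<omega> ^ n \<noteq> 1"
    using omega_exists by blast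
  have xl: "x \<in> level_set N K M1 M2 \<xi>" using xf unfolding fixset_def by auto
  have "torus_act \<omega> \<omega> \<omega> \<omega> \<omega> x \<in> gauge_orbit N K M1 M2 x"
    using xf om1 unfolding fixset_def by auto
  then obtain g h where g: "unitary M1 g" and h: "unitary M2 h"
    and gh: "gauge_act N K M1 M2 g h x = torus_act \<omega> \<omega> \<omega> \<omega> \<omega> x"
    unfolding gauge_orbit_def by auto
  obtain U d where U: "unitary M1 U" and d1: "\<forall>i<M1. cmod (d i) = 1"
    and Ud: "mmul M1 (mmul M1 (madj U) g) U = diagm M1 d" using spectral[OF g] by blast
  obtain V e where V: "unitary M2 V" and e1: "\<forall>i<M2. cmod (e i) = 1"
    and Ve: "mmul M2 (mmul M2 (madj V) h) V = diagm M2 e" using spectral[OF h] by blast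
  define x' where "x' = gauge_act N K M1 M2 (madj U) (madj V) x"
  have x'l: "x' \<in> level_set N K M1 M2 \<xi>"
    unfolding x'_def by (intro level_gauge xl unitary_madj U V)
  have x'g: "gauge_act N K M1 M2 (diagm M1 d) (diagm M2 e) x' = torus_act \<omega> \<omega> \<omega> \<omega> \<omega> x'"
    unfolding x'_def by (rule diag_reduce[OF xl g h gh U Ud V Ve])
  have xx': "x = gauge_act N K M1 M2 U V x'"
  proof -
    have "mmul M1 U (madj U) = mid M1" "mmul M2 V (madj V) = mid M2"
      using U V unfolding unitary_def by auto
    then show ?thesis unfolding x'_def gauge_act_comp using gauge_id_dims[OF level_dims[OF xl]] by simp
  qed
  obtain X Y I J X' Y' I' J' S where xe: "x' = (X, Y, I, J, X', Y', I', J', S)"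
    by (cases x') auto
  have cb: "\<forall>i j. cmod (X i j) \<le> B1 \<and> cmod (Y i j) \<le> B1 \<and>
     cmod (I i j) \<le> B1 \<and> cmod (J i j) \<le> B1 \<and>
     cmod (X' i j) \<le> B1 \<and> cmod (Y' i j) \<le> B1 \<and>
     cmod (I' i j) \<le> B1 \<and> cmod (J' i j) \<le> B1 \<and> cmod (S i j) \<le> B1"
    unfolding B1_def using coord_bound[OF x'l[unfolded xe] xi x'g[unfolded xe] d1 e1 om1 om] .
  have Ub: "\<forall>i j. cmod (U i j) \<le> 1" "\<forall>i j. cmod (madj U i j) \<le> 1"
    using unitary_bound[OF U] unitary_bound[OF unitary_madj[OF U]] by auto
  have Vb: "\<forall>i j. cmod (V i j) \<le> 1" "\<forall>i j. cmod (madj V i j) \<le> 1"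
    using unitary_bound[OF V] unitary_bound[OF unitary_madj[OF V]] by auto
  have cj_b: "\<forall>i j. cmod (mmul p (mmul p W A) (madj W) i j) \<le> m * m * B1"
    if W: "\<forall>i j. cmod (W i j) \<le> 1" "\<forall>i j. cmod (madj W i j) \<le> 1" and A: "\<forall>i j. cmod (A i j) \<le> B1"
      and p: "real p \<le> m" for p W A
  proof (intro allI)
    fix i j
    have "\<forall>i j. cmod (mmul p W A i j) \<le> real p * (1 * B1)"
      using bound_mmul[OF W(1) A] by blast
    then have "cmod (mmul p (mmul p W A) (madj W) i j) \<le> real p * ((real p * (1 * B1)) * 1)"
      using bound_mmul[OF _ W(2)] by blast
    also have "\<dots> \<le> m * m * B1" using bnd2[of "real p" m "real p" B1] p B1nn by simp
    finally show "cmod (mmul p (mmul p W A) (madj W) i j) \<le> m * m * B1" .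
  qed
  have l_b: "\<forall>i j. cmod (mmul p W A i j) \<le> m * m * B1"
    if W: "\<forall>i j. cmod (W i j) \<le> 1" and A: "\<forall>i j. cmod (A i j) \<le> B1" and p: "real p \<le> m" for p W A
  proof (intro allI)
    fix i j
    have "cmod (mmul p W A i j) \<le> real p * (1 * B1)" using bound_mmul[OF W A] by blast
    also have "\<dots> \<le> m * m * B1" using bnd1[of "real p" m B1] p B1nn m1 by simp
    finally show "cmod (mmul p W A i j) \<le> m * m * B1" .
  qed
  have r_b: "\<forall>i j. cmod (mmul p A W i j) \<le> m * m * B1"
    if W: "\<forall>i j. cmod (W i j) \<le> 1" and A: "\<forall>i j. cmod (A i j) \<le> B1" and p: "real p \<le> m" for p W A
  proof (intro allI)
    fix i j
    have "cmod (mmul p A W i j) \<le> real p * (B1 * 1)" using bound_mmul[OF A W] by blast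
    also have "\<dots> \<le> m * m * B1" using bnd1[of "real p" m B1] p B1nn m1 by simp
    finally show "cmod (mmul p A W i j) \<le> m * m * B1" .
  qed
  have s_b: "\<forall>i j. cmod (mmul M1 (mmul M2 V S) (madj U) i j) \<le> m * m * B1"
  proof (intro allI)
    fix i j
    have "\<forall>i j. cmod (mmul M2 V S i j) \<le> real M2 * (1 * B1)"
      using bound_mmul[OF Vb(1)] cb by blast
    then have "cmod (mmul M1 (mmul M2 V S) (madj U) i j) \<le> real M1 * ((real M2 * (1 * B1)) * 1)"
      using bound_mmul[OF _ Ub(2)] by blast
    also have "\<dots> \<le> m * m * B1" using bnd2[of "real M1" m "real M2" B1] m1 B1nn by simp
    finally show "cmod (mmul M1 (mmul M2 V S) (madj U) i j) \<le> m * m * B1" .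
  qed
  have "x = (mmul M1 (mmul M1 U X) (madj U), mmul M1 (mmul M1 U Y) (madj U),
      mmul M1 U I, mmul M1 J (madj U),
      mmul M2 (mmul M2 V X') (madj V), mmul M2 (mmul M2 V Y') (madj V),
      mmul M2 V I', mmul M2 J' (madj V),
      mmul M1 (mmul M2 V S) (madj U))"
    unfolding xx' xe gauge_act_def by simp
  moreover have "\<forall>i j. cmod (X i j) \<le> B1" "\<forall>i j. cmod (Y i j) \<le> B1" "\<forall>i j. cmod (I i j) \<le> B1"
    "\<forall>i j. cmod (J i j) \<le> B1" "\<forall>i j. cmod (X' i j) \<le> B1" "\<forall>i j. cmod (Y' i j) \<le> B1"
    "\<forall>i j. cmod (I' i j) \<le> B1" "\<forall>i j. cmod (J' i j) \<le> B1"
    using cb by auto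
  ultimately show "x \<in> BoxQ (real (M1 + M2 + 1) * real (M1 + M2 + 1) * (\<bar>\<xi>\<bar> * (M1 + M2) + 1))"
    unfolding BoxQ_def m_def[symmetric] B1_def[symmetric] BoxS_def
    using cj_b[OF Ub] cj_b[OF Vb] l_b[OF Ub(1)] l_b[OF Vb(1)] r_b[OF Ub(2)] r_b[OF Vb(2)] s_b m1
    by simp
qed

theorem proposition6:
  fixes N K M1 M2 :: nat and \<xi> :: real
  assumes "\<xi> \<noteq> 0"
  shows "compactin (moduli_top N K M1 M2 \<xi>)
           {Q \<in> moduli N K M1 M2 \<xi>. \<forall>r1 r2 s1 s2 t.
              norm r1 = 1 \<and> norm r2 = 1 \<and> norm s1 = 1 \<and> norm s2 = 1 \<and> norm t = 1 \<longrightarrow>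
              torus_act r1 r2 s1 s2 t ` Q = Q}"
  by (rule reduction[OF fixset_compact[OF fixset_bounded[OF assms]]])

end
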